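(* Let $0<\underline{s}<\overline{s}<1$, $p\in(0,1)$, $u,v>0$ with $u\ne v$, with $\mathcal{E}_0\ne\emptyset$, and fix $\varepsilon_0>0$ and $n\in\mathbb{N}$. If $f\in F^\infty_{(\underline{s},\overline{s})}$ is real-analytic on $(\underline{s},\overline{s})$, then $f\notin\overline{F}_n$, where $\overline{F}_n$ is the closure in $F^\infty_{(\underline{s},\overline{s})}$ (for the $L_\infty$-norm) of the set $F_n$ of signals $g$ whose set $S_g=\{c\in C_{\varepsilon_0}: G_g(\lambda,0)=G_g(\lambda,c)=0\text{ for some }\lambda\in\mathcal{E}_0\cap\mathcal{E}_c\}$ has Lebesgue measure at least $\frac1n$.
   Context: $F^\infty_{(\underline{s},\overline{s})}=\{f\in L_\infty(\underline{s},\overline{s})\cap C^0(\underline{s},\overline{s}): \int_{\underline{s}}^{\overline{s}} f(s)\frac{1-2s}{s}ds=0,\ \int_{\underline{s}}^{\overline{s}} f=1,\ f\ge0,\ f(s)\frac{1-s}{s}\in L_\infty(\underline{s},\overline{s})\}$. For $\lambda>0$, $c\in(-1,u)\cap(-v,1)$: $m(\lambda,c)=\frac{\lambda(1+c)}{\lambda(1+c)+(u-c)}$, $mm(\lambda,c)=\frac{\lambda(1-c)}{\lambda(1-c)+(v+c)}$; $\mathcal{E}_c=\{\lambda>0: m(\lambda,c),mm(\lambda,c)\in(\underline{s},\overline{s})\}$. $C=\{c\in(-1,u)\cap(-v,1):\mathcal{E}_c\ne\emptyset\}\setminus\{0\}$, $C_{\varepsilon_0}=C\cap(-1+\varepsilon_0,u-\varepsilon_0)\cap(-v+\varepsilon_0,1-\varepsilon_0)$.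 $G_f(\lambda,c)=p\int_{\underline{s}}^{m(\lambda,c)} f(s)\frac{1-2s}{s}ds+(1-p)\int_{mm(\lambda,c)}^{\overline{s}} f(s)\frac{1-2s}{s}ds$. *)

theory Defs
  imports "HOL-Analysis.Analysis"
begin

definition wt :: "real \<Rightarrow> real" where
  "wt s = (1 - 2 * s) / s"

text \<open>Functions are real functions
  whose values outside (sl, sh) are irrelevant; L-infinity membership of a continuous
  function on the open interval is boundedness there.\<close>
definition Finf :: "real \<Rightarrow> real \<Rightarrow> (real \<Rightarrow> real) set" where
  "Finf sl sh = {f.
     (\<exists>B. \<forall>s\<in>{sl<..<sh}. \<bar>f s\<bar> \<le> B) \<and>
     continuous_on {sl<..<sh} f \<and>
     f integrable_on {sl..sh} \<and>
     (\<lambda>s. f s * wt s) integrable_on {sl..sh} \<and>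
     integral {sl..sh} (\<lambda>s. f s * wt s) = 0 \<and>
     integral {sl..sh} f = 1 \<and>
     (\<forall>s\<in>{sl<..<sh}. f s \<ge> 0) \<and>
     (\<exists>B. \<forall>s\<in>{sl<..<sh}. \<bar>f s * (1 - s) / s\<bar> \<le> B)}"

definition mfun :: "real \<Rightarrow> real \<Rightarrow> real \<Rightarrow> real" where
  "mfun u lam c = lam * (1 + c) / (lam * (1 + c) + (u - c))"

definition mmfun :: "real \<Rightarrow> real \<Rightarrow> real \<Rightarrow> real" where
  "mmfun v lam c = lam * (1 - c) / (lam * (1 - c) + (v + c))"

definition Eset :: "real \<Rightarrow> real \<Rightarrow> real \<Rightarrow> real \<Rightarrow> real \<Rightarrow> real set" where
  "Eset sl sh u v c = {lam. lam > 0 \<and> mfun u lam c \<in> {sl<..<sh} \<and> mmfun v lam c \<in> {sl<..<sh}}"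

definition Cset :: "real \<Rightarrow> real \<Rightarrow> real \<Rightarrow> real \<Rightarrow> real set" where
  "Cset sl sh u v = {c. -1 < c \<and> c < u \<and> -v < c \<and> c < 1 \<and> Eset sl sh u v c \<noteq> {}} - {0}"

definition Ceps :: "real \<Rightarrow> real \<Rightarrow> real \<Rightarrow> real \<Rightarrow> real \<Rightarrow> real set" where
  "Ceps sl sh u v eps0 = Cset sl sh u v \<inter> {-1 + eps0<..<u - eps0} \<inter> {-v + eps0<..<1 - eps0}"

definition Gf :: "real \<Rightarrow> real \<Rightarrow> real \<Rightarrow> real \<Rightarrow> real \<Rightarrow> (real \<Rightarrow> real) \<Rightarrow> real \<Rightarrow> real \<Rightarrow> real" where
  "Gf sl sh p u v f lam c =
     p * integral {sl..mfun u lam c} (\<lambda>s. f s * wt s)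
     + (1 - p) * integral {mmfun v lam c..sh} (\<lambda>s. f s * wt s)"

definition Sset :: "real \<Rightarrow> real \<Rightarrow> real \<Rightarrow> real \<Rightarrow> real \<Rightarrow> real \<Rightarrow> (real \<Rightarrow> real) \<Rightarrow> real set" where
  "Sset sl sh p u v eps0 g = {c \<in> Ceps sl sh u v eps0.
     \<exists>lam \<in> Eset sl sh u v 0 \<inter> Eset sl sh u v c. Gf sl sh p u v g lam 0 = 0 \<and> Gf sl sh p u v g lam c = 0}"

definition Fn :: "real \<Rightarrow> real \<Rightarrow> real \<Rightarrow> real \<Rightarrow> real \<Rightarrow> real \<Rightarrow> nat \<Rightarrow> (real \<Rightarrow> real) set" where
  "Fn sl sh p u v eps0 n = {g \<in> Finf sl sh.
     Sset sl sh p u v eps0 g \<in> sets lebesgue \<and>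
     emeasure lebesgue (Sset sl sh p u v eps0 g) \<ge> ennreal (1 / real n)}"

definition Linf_closure :: "real \<Rightarrow> real \<Rightarrow> (real \<Rightarrow> real) set \<Rightarrow> (real \<Rightarrow> real) set" where
  "Linf_closure sl sh A = {f \<in> Finf sl sh. \<forall>e>0. \<exists>g\<in>A. \<forall>s\<in>{sl<..<sh}. \<bar>f s - g s\<bar> < e}"

definition real_analytic_on :: "(real \<Rightarrow> real) \<Rightarrow> real set \<Rightarrow> bool" where
  "real_analytic_on f S \<longleftrightarrow> (\<forall>x\<in>S. \<exists>r>0. \<exists>a::nat \<Rightarrow> real.
      \<forall>y. \<bar>y - x\<bar> < r \<longrightarrow> (\<lambda>k. a k * (y - x) ^ k) sums f y)"

end

theory Submission
  imports Defs "HOL-Complex_Analysis.Complex_Analysis"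
begin

definition cext :: "(real \<Rightarrow> real) \<Rightarrow> real set \<Rightarrow> bool" where
 "cext g S \<longleftrightarrow> (\<forall>x\<in>S. \<exists>r>0. \<exists>G. G holomorphic_on ball (complex_of_real x) r \<and>
     (\<forall>y. \<bar>y - x\<bar> < r \<longrightarrow> G (complex_of_real y) = complex_of_real (g y)))"

lemma cext_analytic:
  assumes "real_analytic_on f S" shows "cext f S"
  unfolding cext_def
proof
  fix x assume "x \<in> S"
  then obtain r a where r: "r > 0" and a: "\<And>y. \<bar>y - x\<bar> < r \<Longrightarrow> (\<lambda>k. a k * (y - x) ^ k) sums f y"
    using assms unfolding real_analytic_on_def by blast
  define F where "F = Abs_fps (\<lambda>k. complex_of_real (a k))"
  have rad: "fps_conv_radius F \<ge> ereal r"
    unfolding fps_conv_radius_def F_def fps_nth_Abs_fps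
  proof (rule conv_radius_geI_ex')
    fix \<rho> :: real assume "0 < \<rho>" "ereal \<rho> < ereal r"
    then have "\<bar>(x + \<rho>) - x\<bar> < r" by simp
    from a[OF this] have "summable (\<lambda>k. a k * \<rho> ^ k)" by (simp add: sums_summable)
    then have "summable (\<lambda>k. complex_of_real (a k * \<rho> ^ k))"
      by (simp only: summable_complex_of_real)
    then show "summable (\<lambda>n. complex_of_real (a n) * complex_of_real \<rho> ^ n)" by simp
  qed
  define G where "G = (\<lambda>z. eval_fps F (z - complex_of_real x))"
  have "G holomorphic_on ball (complex_of_real x) r"
  proof -
    have "(\<lambda>z. z - complex_of_real x) ` ball (complex_of_real x) r \<subseteq> eball 0 (fps_conv_radius F)"
    proof
      fix w assume "w \<in> (\<lambda>z. z - complex_of_real x) ` ball (complex_of_real x) r"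
      then obtain z where "z \<in> ball (complex_of_real x) r" "w = z - complex_of_real x" by blast
      then have "norm w < r" by (simp add: dist_norm norm_minus_commute)
      then show "w \<in> eball 0 (fps_conv_radius F)" using rad
        by (auto intro: order_less_le_trans[of _ "ereal r"])
    qed
    then show ?thesis unfolding G_def
      by (intro holomorphic_on_compose_gen[unfolded o_def, OF _ holomorphic_on_eval_fps]) (auto intro!: holomorphic_intros)
  qed
  moreover have "\<forall>y. \<bar>y - x\<bar> < r \<longrightarrow> G (complex_of_real y) = complex_of_real (f y)"
  proof (intro allI impI)
    fix y assume "\<bar>y - x\<bar> < r"
    from sums_of_real[OF a[OF this]]
    have "(\<lambda>k. complex_of_real (a k) * (complex_of_real y - complex_of_real x) ^ k) sums complex_of_real (f y)"
      by simp
    then show "G (complex_of_real y) = complex_of_real (f y)"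
      unfolding G_def eval_fps_def F_def fps_nth_Abs_fps by (simp add: sums_iff)
  qed
  ultimately show "\<exists>r>0. \<exists>G. G holomorphic_on ball (complex_of_real x) r \<and>
     (\<forall>y. \<bar>y - x\<bar> < r \<longrightarrow> G (complex_of_real y) = complex_of_real (f y))" using r by blast
qed

lemma cext_local_zero:
  assumes "cext g S" "x \<in> S" "x islimpt {t\<in>S. g t = 0}"
  shows "\<exists>r>0. \<forall>t. \<bar>t - x\<bar> < r \<longrightarrow> g t = 0"
proof -
  obtain r G where r: "r > 0" and hol: "G holomorphic_on ball (complex_of_real x) r"
    and G: "\<And>y. \<bar>y - x\<bar> < r \<Longrightarrow> G (complex_of_real y) = complex_of_real (g y)"
    using assms(1,2) unfolding cext_def by blast
  define U where "U = complex_of_real ` {t. \<bar>t - x\<bar> < r \<and> g t = 0}"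
  have U0: "G z = 0" if "z \<in> U" for z using that G unfolding U_def by auto
  have Usub: "U \<subseteq> ball (complex_of_real x) r"
    unfolding U_def by (auto simp: dist_of_real dist_real_def abs_minus_commute)
  have lim: "complex_of_real x islimpt U"
  proof (unfold islimpt_approachable, intro allI impI)
    fix e :: real assume "e > 0"
    then obtain t where t: "t \<in> {t\<in>S. g t = 0}" "t \<noteq> x" "dist t x < min e r"
      using assms(3) unfolding islimpt_approachable by (metis min_less_iff_conj r)
    then have "complex_of_real t \<in> U" unfolding U_def by (auto simp: dist_real_def)
    moreover have "dist (complex_of_real t) (complex_of_real x) < e" using t by (simp add: dist_of_real)
    ultimately show "\<exists>x'\<in>U. x' \<noteq> complex_of_real x \<and> dist x' (complex_of_real x) < e"
      using t(2) by (intro bexI[of _ "complex_of_real t"]) auto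
  qed
  have "\<forall>t. \<bar>t - x\<bar> < r \<longrightarrow> g t = 0"
  proof (intro allI impI)
    fix t assume "\<bar>t - x\<bar> < r"
    then have "complex_of_real t \<in> ball (complex_of_real x) r"
      by (simp add: dist_of_real dist_real_def abs_minus_commute)
    then have "G (complex_of_real t) = 0"
      using analytic_continuation[OF hol open_ball connected_ball Usub _ lim U0] r by auto
    then show "g t = 0" using G[OF \<open>\<bar>t - x\<bar> < r\<close>] by simp
  qed
  then show ?thesis using r by blast
qed

lemma cext_identity:
  assumes "cext g S" "open S" "connected S" "y \<in> S" "y islimpt {t\<in>S. g t = 0}"
  shows "\<forall>x\<in>S. g x = 0"
proof -
  define Z where "Z = {t\<in>S. g t = 0}"
  define A where "A = {x\<in>S. x islimpt Z}"
  define B where "B = {x\<in>S. \<not> x islimpt Z}"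
  have oA: "open A"
  proof (subst open_subopen, intro ballI)
    fix x assume "x \<in> A"
    then obtain r where r: "r > 0" "\<And>t. \<bar>t - x\<bar> < r \<Longrightarrow> g t = 0"
      using cext_local_zero[OF assms(1)] unfolding A_def Z_def by blast
    obtain e where e: "e > 0" "ball x e \<subseteq> S" using \<open>x \<in> A\<close> assms(2) unfolding A_def
      using open_contains_ball by blast
    define \<rho> where "\<rho> = min r e"
    have bZ: "ball x \<rho> \<subseteq> Z" using e r unfolding Z_def \<rho>_def by (auto simp: dist_real_def abs_minus_commute)
    have "ball x \<rho> \<subseteq> A"
    proof
      fix z assume z: "z \<in> ball x \<rho>"
      then have "z islimpt ball x \<rho>" using e r by (auto simp: \<rho>_def islimpt_ball)
      then have "z islimpt Z" using bZ islimpt_subset by blast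
      then show "z \<in> A" using z e unfolding A_def \<rho>_def by auto
    qed
    then show "\<exists>T. open T \<and> x \<in> T \<and> T \<subseteq> A" using e r by (auto simp: \<rho>_def intro!: exI[of _ "ball x \<rho>"])
  qed
  have oB: "open B"
  proof (subst open_subopen, intro ballI)
    fix x assume "x \<in> B"
    then obtain T where T: "open T" "x \<in> T" "\<And>y. y \<in> Z \<Longrightarrow> y \<in> T \<Longrightarrow> y = x"
      unfolding B_def islimpt_def by blast
    have "T \<inter> S \<subseteq> B"
    proof
      fix z assume z: "z \<in> T \<inter> S"
      show "z \<in> B"
      proof (cases "z = x")
        case True then show ?thesis using \<open>x \<in> B\<close> by simp
      next
        case False
        have "open (T - {x})" using T(1) by (simp add: open_Diff)
        have zT: "z \<in> T - {x}" using z False by auto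
        have "\<not> z islimpt Z"
        proof
          assume "z islimpt Z"
          then obtain y where "y \<in> Z" "y \<in> T - {x}" "y \<noteq> z"
            using \<open>z islimpt Z\<close>[unfolded islimpt_def, rule_format, OF zT \<open>open (T - {x})\<close>] by blast
          then show False using T(3) by blast
        qed
        then show ?thesis using z unfolding B_def by auto
      qed
    qed
    then show "\<exists>T'. open T' \<and> x \<in> T' \<and> T' \<subseteq> B"
      using T \<open>x \<in> B\<close> assms(2) unfolding B_def by (intro exI[of _ "T \<inter> S"]) auto
  qed
  have "A \<inter> S = {} \<or> B \<inter> S = {}"
  proof (rule connectedD[OF assms(3) oA oB])
    show "A \<inter> B \<inter> S = {}" unfolding A_def B_def by blast
    show "S \<subseteq> A \<union> B" unfolding A_def B_def by blast
  qed
  moreover have "y \<in> A" using assms(4,5) unfolding A_def Z_def by auto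
  ultimately have "B \<inter> S = {}" using assms(4) by auto
  then have "\<forall>x\<in>S. x \<in> A" unfolding B_def A_def by auto
  then show ?thesis
  proof (intro ballI)
    fix x assume "x \<in> S"
    then have "x \<in> S" "x islimpt {t\<in>S. g t = 0}" using \<open>\<forall>x\<in>S. x \<in> A\<close> unfolding A_def Z_def by auto
    from cext_local_zero[OF assms(1) this] show "g x = 0" by force
  qed
qed

lemma cext_zeros_countable:
  assumes "cext g S" "open S" "connected S" "x0 \<in> S" "g x0 \<noteq> 0"
  shows "countable {t\<in>S. g t = 0}"
proof -
  have nl: "\<forall>y\<in>S. \<not> y islimpt {t\<in>S. g t = 0}"
    using cext_identity[OF assms(1-3)] assms(4,5) by blast
  have "{t\<in>S. g t = 0} sparse_in S"
    unfolding sparse_in_def using nl assms(2) by blast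
  moreover have "S \<inter> {t\<in>S. g t = 0} = {t\<in>S. g t = 0}" by blast
  ultimately show ?thesis using sparse_imp_countable[OF assms(2)] by metis
qed

lemma cext_lin:
  assumes "cext g S" "cext h S"
  shows "cext (\<lambda>x. a * g x + b * h x) S"
  unfolding cext_def
proof
  fix x assume "x \<in> S"
  obtain r1 G1 where r1: "r1 > 0" "G1 holomorphic_on ball (complex_of_real x) r1"
    "\<And>y. \<bar>y - x\<bar> < r1 \<Longrightarrow> G1 (complex_of_real y) = complex_of_real (g y)"
    using assms(1) \<open>x \<in> S\<close> unfolding cext_def by blast
  obtain r2 G2 where r2: "r2 > 0" "G2 holomorphic_on ball (complex_of_real x) r2"
    "\<And>y. \<bar>y - x\<bar> < r2 \<Longrightarrow> G2 (complex_of_real y) = complex_of_real (h y)"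
    using assms(2) \<open>x \<in> S\<close> unfolding cext_def by blast
  have "(\<lambda>z. complex_of_real a * G1 z + complex_of_real b * G2 z) holomorphic_on ball (complex_of_real x) (min r1 r2)"
    using r1(2) r2(2) by (auto intro!: holomorphic_intros elim: holomorphic_on_subset)
  moreover have "\<forall>y. \<bar>y - x\<bar> < min r1 r2 \<longrightarrow> complex_of_real a * G1 (complex_of_real y) + complex_of_real b * G2 (complex_of_real y)
      = complex_of_real (a * g y + b * h y)"
    using r1(3) r2(3) by simp
  ultimately show "\<exists>r>0. \<exists>G. G holomorphic_on ball (complex_of_real x) r \<and>
     (\<forall>y. \<bar>y - x\<bar> < r \<longrightarrow> G (complex_of_real y) = complex_of_real (a * g y + b * h y))"
    using r1(1) r2(1) by (intro exI[of _ "min r1 r2"] conjI exI) auto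
qed

lemma cext_compose:
  assumes "cext g T" "\<Phi> holomorphic_on W" "open W" "\<And>x. x \<in> S \<Longrightarrow> complex_of_real x \<in> W"
    "\<And>y. complex_of_real y \<in> W \<Longrightarrow> \<Phi> (complex_of_real y) = complex_of_real (\<phi> y)"
    "\<And>x. x \<in> S \<Longrightarrow> \<phi> x \<in> T"
  shows "cext (\<lambda>x. g (\<phi> x)) S"
  unfolding cext_def
proof
  fix x assume "x \<in> S"
  obtain r G where r: "r > 0" "G holomorphic_on ball (complex_of_real (\<phi> x)) r"
    "\<And>y. \<bar>y - \<phi> x\<bar> < r \<Longrightarrow> G (complex_of_real y) = complex_of_real (g y)"
    using assms(1) assms(6)[OF \<open>x \<in> S\<close>] unfolding cext_def by blast
  have xW: "complex_of_real x \<in> W" using assms(4) \<open>x \<in> S\<close> .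
  have "continuous (at (complex_of_real x)) \<Phi>"
    using assms(2,3) xW holomorphic_on_imp_continuous_on continuous_on_eq_continuous_at by blast
  then obtain d1 where d1: "d1 > 0" "\<And>z. dist z (complex_of_real x) < d1 \<Longrightarrow> dist (\<Phi> z) (\<Phi> (complex_of_real x)) < r"
    using r(1) unfolding continuous_at_eps_delta by blast
  obtain d2 where d2: "d2 > 0" "ball (complex_of_real x) d2 \<subseteq> W"
    using assms(3) xW open_contains_ball by blast
  define d where "d = min d1 d2"
  have \<Phi>x: "\<Phi> (complex_of_real x) = complex_of_real (\<phi> x)" using assms(5) xW .
  have img: "\<Phi> ` ball (complex_of_real x) d \<subseteq> ball (complex_of_real (\<phi> x)) r"
    using d1 \<Phi>x by (auto simp: d_def dist_commute)
  have bW: "ball (complex_of_real x) d \<subseteq> W" using d2 by (auto simp: d_def)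
  have "(\<lambda>z. G (\<Phi> z)) holomorphic_on ball (complex_of_real x) d"
    using holomorphic_on_compose_gen[OF holomorphic_on_subset[OF assms(2) bW] r(2) img, unfolded o_def] .
  moreover have "\<forall>y. \<bar>y - x\<bar> < d \<longrightarrow> G (\<Phi> (complex_of_real y)) = complex_of_real (g (\<phi> y))"
  proof (intro allI impI)
    fix y assume y: "\<bar>y - x\<bar> < d"
    then have yb: "complex_of_real y \<in> ball (complex_of_real x) d"
      by (simp add: dist_of_real dist_real_def abs_minus_commute)
    then have "complex_of_real y \<in> W" using d2 by (auto simp: d_def)
    then have e: "\<Phi> (complex_of_real y) = complex_of_real (\<phi> y)" using assms(5) by blast
    have "\<Phi> (complex_of_real y) \<in> ball (complex_of_real (\<phi> x)) r" using img yb by blast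
    then have "\<bar>\<phi> y - \<phi> x\<bar> < r" using e by (simp add: dist_of_real dist_real_def abs_minus_commute)
    then show "G (\<Phi> (complex_of_real y)) = complex_of_real (g (\<phi> y))" using e r(3) by simp
  qed
  ultimately show "\<exists>r>0. \<exists>G. G holomorphic_on ball (complex_of_real x) r \<and>
     (\<forall>y. \<bar>y - x\<bar> < r \<longrightarrow> G (complex_of_real y) = complex_of_real (g (\<phi> y)))"
    using d1(1) d2(1) by (intro exI[of _ d] conjI exI[of _ "\<lambda>z. G (\<Phi> z)"]) (auto simp: d_def)
qed

  

lemma cext_H:
  assumes f: "f \<in> Finf sl sh" and sl: "0 < sl" and ce: "cext f {sl<..<sh}"
  shows "cext (\<lambda>x. integral {sl..x} (\<lambda>s. f s * wt s)) {sl<..<sh}"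
  unfolding cext_def
proof
  fix x0 assume x0: "x0 \<in> {sl<..<sh}"
  obtain r F where r: "r > 0" "F holomorphic_on ball (complex_of_real x0) r"
    "\<And>y. \<bar>y - x0\<bar> < r \<Longrightarrow> F (complex_of_real y) = complex_of_real (f y)"
    using ce x0 unfolding cext_def by blast
  define r' where "r' = min r (min (x0 - sl) (sh - x0))"
  have r'pos: "r' > 0" using r x0 by (auto simp: r'_def)
  define B where "B = ball (complex_of_real x0) r'"
  have B0: "z \<noteq> 0" if "z \<in> B" for z
  proof
    assume "z = 0"
    with that have "norm (complex_of_real x0) < r'" by (simp add: B_def)
    then show False using x0 sl by (simp add: r'_def)
  qed
  define Fw where "Fw = (\<lambda>z. F z * ((1 - 2 * z) / z))"
  have FB: "F holomorphic_on B" using r(2) by (rule holomorphic_on_subset) (simp add: B_def r'_def subset_ball)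
  have "(\<lambda>z. (1 - 2 * z) / z) holomorphic_on B"
    by (rule holomorphic_on_divide) (auto intro: holomorphic_intros dest: B0)
  then have holFw: "Fw holomorphic_on B"
    unfolding Fw_def using FB by (rule holomorphic_on_mult[rotated])
  obtain P where P: "\<And>z. z \<in> B \<Longrightarrow> (P has_field_derivative Fw z) (at z within B)"
    using holomorphic_convex_primitive'[OF convex_ball open_ball holFw[unfolded B_def]] unfolding B_def by blast
  have oB: "open B" unfolding B_def by simp
  have Pat: "(P has_field_derivative Fw z) (at z)" if "z \<in> B" for z
    using P[OF that] unfolding at_within_open[OF that oB] .
  define H where "H = (\<lambda>x. integral {sl..x} (\<lambda>s. f s * wt s))"
  define J where "J = {x0 - r'<..<x0 + r'}"
  have JI: "t \<in> {sl<..<sh}" if "t \<in> J" for t using that by (auto simp: J_def r'_def)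
  have JB: "complex_of_real t \<in> B" if "t \<in> J" for t
    using that by (auto simp: J_def B_def dist_of_real dist_real_def abs_less_iff)
  have Hder: "(H has_real_derivative f t * wt t) (at t)" if "t \<in> {sl<..<sh}" for t
  proof -
    have int: "(\<lambda>s. f s * wt s) integrable_on {sl..sh}" using f unfolding Finf_def by blast
    have cf: "continuous_on {sl<..<sh} f" using f unfolding Finf_def by blast
    have "isCont f t" using cf that continuous_on_eq_continuous_at[OF open_greaterThanLessThan] by blast
    moreover have "isCont wt t" using that sl unfolding wt_def by (auto intro!: continuous_intros)
    ultimately have "isCont (\<lambda>s. f s * wt s) t" by (rule isCont_mult)
    then have "continuous (at t within ({sl..sh} - {})) (\<lambda>s. f s * wt s)"
      using continuous_at_imp_continuous_at_within by blast
    from integral_has_vector_derivative_continuous_at[OF int _ finite.emptyI this]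
    have "(H has_vector_derivative f t * wt t) (at t within {sl..sh})"
      using that unfolding H_def by auto
    then show ?thesis using that
      by (simp add: at_within_Icc_at has_real_derivative_iff_has_vector_derivative)
  qed
  define Q where "Q = (\<lambda>t. P (complex_of_real t) - complex_of_real (H t))"
  have "\<exists>c. \<forall>t\<in>J. Q t = c"
  proof (rule has_derivative_zero_constant)
    show "convex J" by (simp add: J_def)
    fix t assume t: "t \<in> J"
    have d1: "((\<lambda>t. P (complex_of_real t)) has_vector_derivative Fw (complex_of_real t)) (at t within J)"
      by (rule has_vector_derivative_real_field[OF Pat[OF JB[OF t]]])
    have d2: "((\<lambda>t. complex_of_real (H t)) has_vector_derivative complex_of_real (f t * wt t)) (at t within J)"
      by (rule has_vector_derivative_of_real[OF has_field_derivative_at_within[OF Hder[OF JI[OF t]]]])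
    have eq: "Fw (complex_of_real t) = complex_of_real (f t * wt t)"
    proof -
      have "\<bar>t - x0\<bar> < r" using t by (auto simp: J_def r'_def abs_less_iff)
      then show ?thesis unfolding Fw_def wt_def using r(3) by simp
    qed
    have "(Q has_vector_derivative 0) (at t within J)"
      using has_vector_derivative_diff[OF d1 d2] unfolding Q_def eq by simp
    then show "(Q has_derivative (\<lambda>h. 0)) (at t within J)"
      by (simp add: has_vector_derivative_def)
  qed
  then obtain c where c: "\<And>t. t \<in> J \<Longrightarrow> Q t = c" by blast
  have "(\<lambda>z. P z - c) holomorphic_on ball (complex_of_real x0) r'"
  proof -
    have "P holomorphic_on B" unfolding holomorphic_on_def
      using Pat field_differentiable_def field_differentiable_at_within by blast
    then show ?thesis by (auto intro!: holomorphic_intros simp: B_def)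
  qed
  moreover have "\<forall>y. \<bar>y - x0\<bar> < r' \<longrightarrow> P (complex_of_real y) - c = complex_of_real (H y)"
  proof (intro allI impI)
    fix y assume "\<bar>y - x0\<bar> < r'"
    then have "y \<in> J" by (auto simp: J_def abs_less_iff)
    then show "P (complex_of_real y) - c = complex_of_real (H y)" using c unfolding Q_def by force
  qed
  ultimately show "\<exists>r>0. \<exists>G. G holomorphic_on ball (complex_of_real x0) r \<and>
     (\<forall>y. \<bar>y - x0\<bar> < r \<longrightarrow> G (complex_of_real y) = complex_of_real (integral {sl..y} (\<lambda>s. f s * wt s)))"
    using r'pos unfolding H_def by blast
qed

locale sett =
  fixes sl sh :: real and f :: "real \<Rightarrow> real"
  assumes sl0: "0 < sl" and slsh: "sl < sh" and sh1: "sh < 1"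
    and fF: "f \<in> Finf sl sh"
    and fan: "real_analytic_on f {sl<..<sh}"
begin

definition H :: "real \<Rightarrow> real" where "H x = integral {sl..x} (\<lambda>s. f s * wt s)"

lemma int_fw: "(\<lambda>s. f s * wt s) integrable_on {sl..sh}"
  using fF unfolding Finf_def by blast

lemma cont_f: "continuous_on {sl<..<sh} f"
  using fF unfolding Finf_def by blast

lemma f_nonneg: "s \<in> {sl<..<sh} \<Longrightarrow> f s \<ge> 0"
  using fF unfolding Finf_def by blast

lemma H_sl: "H sl = 0" unfolding H_def by simp

lemma H_sh: "H sh = 0" using fF unfolding Finf_def H_def by blast

lemma H_cont: "continuous_on {sl..sh} H"
  unfolding H_def by (rule indefinite_integral_continuous_1[OF int_fw])

lemma H_der: "t \<in> {sl<..<sh} \<Longrightarrow> (H has_real_derivative f t * wt t) (at t)"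
proof -
  assume that: "t \<in> {sl<..<sh}"
  have "isCont f t" using cont_f that continuous_on_eq_continuous_at[OF open_greaterThanLessThan] by blast
  moreover have "isCont wt t" using that sl0 unfolding wt_def by (auto intro!: continuous_intros)
  ultimately have "isCont (\<lambda>s. f s * wt s) t" by (rule isCont_mult)
  then have "continuous (at t within ({sl..sh} - {})) (\<lambda>s. f s * wt s)"
    using continuous_at_imp_continuous_at_within by blast
  from integral_has_vector_derivative_continuous_at[OF int_fw _ finite.emptyI this]
  have "(H has_vector_derivative f t * wt t) (at t within {sl..sh})"
    using that unfolding H_def by auto
  then show ?thesis using that
    by (simp add: at_within_Icc_at has_real_derivative_iff_has_vector_derivative)
qed

lemma cext_f: "cext f {sl<..<sh}" by (rule cext_analytic[OF fan])

lemma cext_Hf: "cext H {sl<..<sh}"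
  unfolding H_def[abs_def] by (rule cext_H[OF fF sl0 cext_f])

lemma f_not_zero_interval:
  assumes "a < b" "{a<..<b} \<subseteq> {sl<..<sh}" "\<And>t. t \<in> {a<..<b} \<Longrightarrow> f t = 0"
  shows False
proof -
  define y where "y = (a + b) / 2"
  have "y \<in> {a<..<b}" using assms(1) by (auto simp: y_def)
  then have yI: "y \<in> {sl<..<sh}" using assms(2) by blast
  have bsub: "ball y ((b - a) / 2) \<subseteq> {a<..<b}"
  proof
    fix t assume "t \<in> ball y ((b - a) / 2)"
    then have "\<bar>y - t\<bar> < (b - a) / 2" by (simp add: dist_real_def)
    then show "t \<in> {a<..<b}" unfolding y_def by (auto simp: abs_less_iff field_simps)
  qed
  have "ball y ((b - a) / 2) \<subseteq> {t \<in> {sl<..<sh}. f t = 0}"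
    using bsub assms(2,3) by blast
  moreover have "y islimpt ball y ((b - a) / 2)" using assms(1) by (simp add: islimpt_ball)
  ultimately have "y islimpt {t \<in> {sl<..<sh}. f t = 0}" by (rule islimpt_subset[rotated])
  from cext_identity[OF cext_f open_greaterThanLessThan connected_Ioo yI this]
  have z: "\<And>t. t \<in> {sl<..<sh} \<Longrightarrow> f t = 0" by blast
  have "integral {sl..sh} f = integral {sl..sh} (\<lambda>t. 0)"
    by (rule integral_spike[of "{sl, sh}"]) (auto simp: z)
  moreover have "integral {sl..sh} f = 1" using fF unfolding Finf_def by blast
  ultimately show False by simp
qed

lemma wt_pos: "0 < s \<Longrightarrow> s < 1/2 \<Longrightarrow> wt s > 0" unfolding wt_def by simp
lemma wt_neg: "0 < s \<Longrightarrow> s > 1/2 \<Longrightarrow> wt s < 0" unfolding wt_def by (simp add: divide_neg_pos)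

lemma H_strict_mono:
  assumes "sl \<le> x" "x < y" "y \<le> 1/2" "y \<le> sh"
  shows "H x < H y"
proof -
  have sub: "{x..y} \<subseteq> {sl..sh}" using assms by auto
  have der: "\<And>t. x < t \<Longrightarrow> t < y \<Longrightarrow> DERIV H t :> f t * wt t \<and> f t * wt t \<ge> 0"
  proof -
    fix t assume "x < t" "t < y"
    then have tI: "t \<in> {sl<..<sh}" using assms by auto
    moreover have "wt t > 0" using \<open>x < t\<close> \<open>t < y\<close> assms sl0 by (intro wt_pos) auto
    ultimately show "DERIV H t :> f t * wt t \<and> f t * wt t \<ge> 0"
      using H_der f_nonneg by auto
  qed
  have cH: "\<And>a b. {a..b} \<subseteq> {sl..sh} \<Longrightarrow> continuous_on {a..b} H"
    using H_cont continuous_on_subset by blast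
  have le: "H a \<le> H b" if "x \<le> a" "a \<le> b" "b \<le> y" for a b
    using DERIV_nonneg_imp_increasing_open[of a b H] der that cH[of a b] sub by force
  have "H x \<noteq> H y"
  proof
    assume eq: "H x = H y"
    have const: "H t = H x" if "x \<le> t" "t \<le> y" for t
      using le[of x t] le[of t y] that eq by auto
    have "f t = 0" if "t \<in> {x<..<y}" for t
    proof -
      have "f t * wt t = 0"
      proof -
        have d1: "DERIV H t :> f t * wt t" using der that by auto
        have d2: "0 < min (t - x) (y - t)" using that by auto
        have d3: "\<forall>s. \<bar>t - s\<bar> < min (t - x) (y - t) \<longrightarrow> H t = H s"
        proof (intro allI impI)
          fix s assume "\<bar>t - s\<bar> < min (t - x) (y - t)"
          then have "x \<le> s" "s \<le> y" by (simp_all add: abs_less_iff min_def split: if_splits)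
          moreover have "x \<le> t" "t \<le> y" using that by auto
          ultimately show "H t = H s" using const[of s] const[of t] by simp
        qed
        show ?thesis using DERIV_local_const[OF d1 d2 d3] .
      qed
      moreover have "wt t > 0" using that assms sl0 by (intro wt_pos) auto
      ultimately show "f t = 0" by simp
    qed
    moreover have "{x<..<y} \<subseteq> {sl<..<sh}" using assms by auto
    ultimately show False using f_not_zero_interval[of x y] assms by blast
  qed
  then show ?thesis using le[of x y] assms by auto
qed

lemma H_strict_anti:
  assumes "1/2 \<le> x" "x < y" "y \<le> sh" "sl \<le> x"
  shows "H x > H y"
proof -
  have sub: "{x..y} \<subseteq> {sl..sh}" using assms by auto
  have der: "\<And>t. x < t \<Longrightarrow> t < y \<Longrightarrow> DERIV H t :> f t * wt t \<and> f t * wt t \<le> 0"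
  proof -
    fix t assume "x < t" "t < y"
    then have tI: "t \<in> {sl<..<sh}" using assms by auto
    moreover have "wt t < 0" using \<open>x < t\<close> \<open>t < y\<close> assms sl0 by (intro wt_neg) auto
    ultimately show "DERIV H t :> f t * wt t \<and> f t * wt t \<le> 0"
      using H_der f_nonneg by (auto simp: mult_nonneg_nonpos)
  qed
  have cH: "\<And>a b. {a..b} \<subseteq> {sl..sh} \<Longrightarrow> continuous_on {a..b} H"
    using H_cont continuous_on_subset by blast
  have le: "H a \<ge> H b" if "x \<le> a" "a \<le> b" "b \<le> y" for a b
    using DERIV_nonpos_imp_decreasing_open[of a b H] der that cH[of a b] sub by force
  have "H x \<noteq> H y"
  proof
    assume eq: "H x = H y"
    have const: "H t = H x" if "x \<le> t" "t \<le> y" for t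
      using le[of x t] le[of t y] that eq by auto
    have "f t = 0" if "t \<in> {x<..<y}" for t
    proof -
      have "f t * wt t = 0"
      proof -
        have d1: "DERIV H t :> f t * wt t" using der that by auto
        have d2: "0 < min (t - x) (y - t)" using that by auto
        have d3: "\<forall>s. \<bar>t - s\<bar> < min (t - x) (y - t) \<longrightarrow> H t = H s"
        proof (intro allI impI)
          fix s assume "\<bar>t - s\<bar> < min (t - x) (y - t)"
          then have "x \<le> s" "s \<le> y" by (simp_all add: abs_less_iff min_def split: if_splits)
          moreover have "x \<le> t" "t \<le> y" using that by auto
          ultimately show "H t = H s" using const[of s] const[of t] by simp
        qed
        show ?thesis using DERIV_local_const[OF d1 d2 d3] .
      qed
      moreover have "wt t < 0" using that assms sl0 by (intro wt_neg) auto
      ultimately show "f t = 0" by simp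
    qed
    moreover have "{x<..<y} \<subseteq> {sl<..<sh}" using assms by auto
    ultimately show False using f_not_zero_interval[of x y] assms by blast
  qed
  then show ?thesis using le[of x y] assms by auto
qed

lemma H_pos: "x \<in> {sl<..<sh} \<Longrightarrow> H x > 0"
proof -
  assume x: "x \<in> {sl<..<sh}"
  show "H x > 0"
  proof (cases "x \<le> 1/2")
    case True then show ?thesis using H_strict_mono[of sl x] x H_sl by auto
  next
    case False then show ?thesis using H_strict_anti[of x sh] x H_sh by auto
  qed
qed

lemma H_zero_iff: "x \<in> {sl..sh} \<Longrightarrow> H x = 0 \<Longrightarrow> x = sl \<or> x = sh"
  using H_pos[of x] by force

lemma H_inj_left: "y \<in> {sl..sh} \<Longrightarrow> z \<in> {sl..sh} \<Longrightarrow> y \<le> 1/2 \<Longrightarrow> z \<le> 1/2 \<Longrightarrow> H y = H z \<Longrightarrow> y = z"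
  using H_strict_mono[of y z] H_strict_mono[of z y] by (cases y z rule: linorder_cases) auto

lemma H_inj_right: "y \<in> {sl..sh} \<Longrightarrow> z \<in> {sl..sh} \<Longrightarrow> y \<ge> 1/2 \<Longrightarrow> z \<ge> 1/2 \<Longrightarrow> H y = H z \<Longrightarrow> y = z"
  using H_strict_anti[of y z] H_strict_anti[of z y] by (cases y z rule: linorder_cases) auto

end

lemma Finf_int: "g \<in> Finf sl sh \<Longrightarrow> (\<lambda>s. g s * wt s) integrable_on {sl..sh}"
  unfolding Finf_def by blast

lemma Gf_eq:
  assumes g: "g \<in> Finf sl sh" and mm: "mmfun v lam c \<in> {sl..sh}"
  shows "Gf sl sh p u v g lam c = p * integral {sl..mfun u lam c} (\<lambda>s. g s * wt s)
           - (1 - p) * integral {sl..mmfun v lam c} (\<lambda>s. g s * wt s)"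
proof -
  have "integral {sl..mmfun v lam c} (\<lambda>s. g s * wt s) + integral {mmfun v lam c..sh} (\<lambda>s. g s * wt s)
        = integral {sl..sh} (\<lambda>s. g s * wt s)"
    by (rule Henstock_Kurzweil_Integration.integral_combine) (use mm Finf_int[OF g] in auto)
  moreover have "integral {sl..sh} (\<lambda>s. g s * wt s) = 0" using g unfolding Finf_def by blast
  ultimately have "integral {mmfun v lam c..sh} (\<lambda>s. g s * wt s) = - integral {sl..mmfun v lam c} (\<lambda>s. g s * wt s)"
    by linarith
  then show ?thesis unfolding Gf_def by (simp add: algebra_simps)
qed

lemma wt_bound: "0 < sl \<Longrightarrow> sl \<le> s \<Longrightarrow> \<bar>wt s\<bar> \<le> 1 / sl + 2"
proof -
  assume a: "0 < sl" "sl \<le> s"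
  then have s0: "s > 0" by simp
  have "\<bar>wt s\<bar> = \<bar>1 - 2 * s\<bar> / s" unfolding wt_def using s0 by (simp add: abs_div)
  also have "\<dots> \<le> (1 + 2 * s) / s" using s0 by (intro divide_right_mono) auto
  also have "\<dots> = 1 / s + 2" using s0 by (simp add: field_simps)
  also have "\<dots> \<le> 1 / sl + 2" using a by (simp add: frac_le)
  finally show ?thesis .
qed

lemma H_approx:
  assumes f: "f \<in> Finf sl sh" and g: "g \<in> Finf sl sh" and sl: "0 < sl" and slsh: "sl < sh"
    and x: "x \<in> {sl..sh}" and e: "\<And>s. s \<in> {sl<..<sh} \<Longrightarrow> \<bar>f s - g s\<bar> < e"
  shows "\<bar>integral {sl..x} (\<lambda>s. g s * wt s) - integral {sl..x} (\<lambda>s. f s * wt s)\<bar> \<le> e * (1 / sl + 2) * (sh - sl)"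
proof -
  have sub: "{sl..x} \<subseteq> {sl..sh}" using x by auto
  have ig: "(\<lambda>s. g s * wt s) integrable_on {sl..x}" by (rule integrable_subinterval_real[OF Finf_int[OF g] sub])
  have i_f: "(\<lambda>s. f s * wt s) integrable_on {sl..x}" by (rule integrable_subinterval_real[OF Finf_int[OF f] sub])
  have eq: "integral {sl..x} (\<lambda>s. g s * wt s) - integral {sl..x} (\<lambda>s. f s * wt s)
      = integral {sl..x} (\<lambda>s. (g s - f s) * wt s)"
    using integral_diff[OF ig i_f] by (simp add: algebra_simps)
  have hi: "((\<lambda>s. (g s - f s) * wt s) has_integral integral {sl..x} (\<lambda>s. (g s - f s) * wt s)) {sl..x}"
    using integrable_diff[OF ig i_f] by (simp add: algebra_simps integrable_integral)
  have e0: "e \<ge> 0"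
  proof -
    have "(sl + sh) / 2 \<in> {sl<..<sh}" using slsh by auto
    from e[OF this] show ?thesis by simp
  qed
  have bnd: "norm ((g s - f s) * wt s) \<le> e * (1 / sl + 2)" if "s \<in> {sl..x} - {sl, sh}" for s
  proof -
    have sI: "s \<in> {sl<..<sh}" using that x by auto
    have "norm ((g s - f s) * wt s) = \<bar>f s - g s\<bar> * \<bar>wt s\<bar>" by (simp add: abs_mult abs_minus_commute)
    also have "\<dots> \<le> e * (1 / sl + 2)"
      using e[OF sI] wt_bound[OF sl, of s] sI by (intro mult_mono) auto
    finally show ?thesis .
  qed
  have "norm (integral {sl..x} (\<lambda>s. (g s - f s) * wt s)) \<le> e * (1 / sl + 2) * measure lborel {sl..x}"
  proof -
    have B0: "0 \<le> e * (1 / sl + 2)" using e0 sl by simp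
    have "finite {sl, sh}" by simp
    from has_integral_bound_real[OF B0 this hi bnd] show ?thesis .
  qed
  also have "\<dots> \<le> e * (1 / sl + 2) * (sh - sl)"
    using x e0 sl by (intro mult_left_mono) auto
  finally show ?thesis using eq by simp
qed

lemma den_m_pos: "(lam::real) > 0 \<Longrightarrow> u > 0 \<Longrightarrow> -1 \<le> c \<Longrightarrow> c \<le> u \<Longrightarrow> lam * (1 + c) + (u - c) > 0"
proof -
  assume a: "lam > 0" "u > 0" "-1 \<le> c" "c \<le> u"
  show ?thesis
  proof (cases "c = -1")
    case True then show ?thesis using a by simp
  next
    case False then have "lam * (1 + c) > 0" using a by simp
    then show ?thesis using a by linarith
  qed
qed

lemma den_mm_pos: "(lam::real) > 0 \<Longrightarrow> v > 0 \<Longrightarrow> -v \<le> c \<Longrightarrow> c \<le> 1 \<Longrightarrow> lam * (1 - c) + (v + c) > 0"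
proof -
  assume a: "lam > 0" "v > 0" "-v \<le> c" "c \<le> 1"
  show ?thesis
  proof (cases "c = 1")
    case True then show ?thesis using a by simp
  next
    case False then have "lam * (1 - c) > 0" using a by simp
    then show ?thesis using a by linarith
  qed
qed

lemma m_strict_mono:
  assumes "lam > 0" "u > 0" "-1 \<le> c1" "c1 < c2" "c2 \<le> u"
  shows "mfun u lam c1 < mfun u lam c2"
proof -
  have d1: "lam * (1 + c1) + (u - c1) > 0" using den_m_pos assms by auto
  have d2: "lam * (1 + c2) + (u - c2) > 0" using den_m_pos assms by auto
  have "lam * (1 + c1) * (lam * (1 + c2) + (u - c2)) < lam * (1 + c2) * (lam * (1 + c1) + (u - c1))"
  proof -
    have "(1 + c1) * (u - c2) < (1 + c2) * (u - c1)"
      using assms by (simp add: algebra_simps) (smt (verit) mult_strict_right_mono)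
    then have "lam * ((1 + c1) * (u - c2)) < lam * ((1 + c2) * (u - c1))"
      using assms(1) by simp
    then show ?thesis by (simp add: algebra_simps)
  qed
  then show ?thesis unfolding mfun_def using d1 d2 by (simp add: divide_less_eq less_divide_eq mult.commute)
qed

lemma mm_strict_anti:
  assumes "lam > 0" "v > 0" "-v \<le> c1" "c1 < c2" "c2 \<le> 1"
  shows "mmfun v lam c2 < mmfun v lam c1"
proof -
  have d1: "lam * (1 - c1) + (v + c1) > 0" using den_mm_pos assms by auto
  have d2: "lam * (1 - c2) + (v + c2) > 0" using den_mm_pos assms by auto
  have "lam * (1 - c2) * (lam * (1 - c1) + (v + c1)) < lam * (1 - c1) * (lam * (1 - c2) + (v + c2))"
  proof -
    have "(1 - c2) * (v + c1) < (1 - c1) * (v + c2)"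
      using assms by (simp add: algebra_simps) (smt (verit) mult_strict_right_mono)
    then have "lam * ((1 - c2) * (v + c1)) < lam * ((1 - c1) * (v + c2))"
      using assms(1) by simp
    then show ?thesis by (simp add: algebra_simps)
  qed
  then show ?thesis unfolding mmfun_def using d1 d2 by (simp add: divide_less_eq less_divide_eq mult.commute)
qed

lemma m_swap_eq:
  assumes "lam > 0" "u \<noteq> v"
    "lam * (1 + c1) + (u - c1) > 0" "lam * (1 + c2) + (u - c2) > 0"
    "lam * (1 - c1) + (v + c1) > 0" "lam * (1 - c2) + (v + c2) > 0"
    "mfun u lam c2 = mmfun v lam c1" "mmfun v lam c2 = mfun u lam c1"
  shows "c1 = c2"
proof -
  have e1: "(1 + c2) * (v + c1) = (1 - c1) * (u - c2)"
  proof -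
    have "lam * (1 + c2) * (lam * (1 - c1) + (v + c1)) = lam * (1 - c1) * (lam * (1 + c2) + (u - c2))"
      using assms(7) assms(4,5) unfolding mfun_def mmfun_def by (simp add: field_simps)
    then have "lam * ((1 + c2) * (v + c1)) = lam * ((1 - c1) * (u - c2))" by (simp add: algebra_simps)
    then show ?thesis using assms(1) by simp
  qed
  have e2: "(1 - c2) * (u + - c1) = (1 + c1) * (v + c2)"
  proof -
    have "lam * (1 - c2) * (lam * (1 + c1) + (u - c1)) = lam * (1 + c1) * (lam * (1 - c2) + (v + c2))"
      using assms(8) assms(3,6) unfolding mfun_def mmfun_def by (simp add: field_simps)
    then have "lam * ((1 - c2) * (u - c1)) = lam * ((1 + c1) * (v + c2))" by (simp add: algebra_simps)
    then show ?thesis using assms(1) by simp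
  qed
  have "(c2 - c1) * (v - u) = 0" using e1 e2 by (simp add: algebra_simps)
  then show ?thesis using assms(2) by simp
qed

lemma frac_gt_iff:
  fixes lam w s :: real
  assumes "lam > 0" "w > 0" "0 < s" "s < 1"
  shows "s < lam / (lam + w) \<longleftrightarrow> w * (s / (1 - s)) < lam"
  using assms by (simp add: field_simps)

lemma frac_lt_iff:
  fixes lam w s :: real
  assumes "lam > 0" "w > 0" "0 < s" "s < 1"
  shows "lam / (lam + w) < s \<longleftrightarrow> lam < w * (s / (1 - s))"
  using assms by (simp add: field_simps)

lemma frac_eq_iff:
  fixes lam w s :: real
  assumes "lam > 0" "w > 0" "0 < s" "s < 1"
  shows "lam / (lam + w) = s \<longleftrightarrow> lam = w * (s / (1 - s))"
  using assms by (simp add: field_simps)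

lemma frac_ge_iff:
  fixes lam w s :: real
  assumes "lam > 0" "w > 0" "0 < s" "s < 1"
  shows "s \<le> lam / (lam + w) \<longleftrightarrow> w * (s / (1 - s)) \<le> lam"
  using assms by (simp add: field_simps)

lemma frac_le_iff:
  fixes lam w s :: real
  assumes "lam > 0" "w > 0" "0 < s" "s < 1"
  shows "lam / (lam + w) \<le> s \<longleftrightarrow> lam \<le> w * (s / (1 - s))"
  using assms by (simp add: field_simps)

lemma m0: "mfun u lam 0 = lam / (lam + u)" unfolding mfun_def by simp
lemma mm0: "mmfun v lam 0 = lam / (lam + v)" unfolding mmfun_def by simp

locale mainl = sett +
  fixes p u v eps0 :: real and n :: nat
  assumes p0: "0 < p" and p1: "p < 1" and u0: "u > 0" and v0: "v > 0" and uv: "u \<noteq> v"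
    and E0ne: "Eset sl sh u v 0 \<noteq> {}" and eps0: "eps0 > 0" and n1: "n \<ge> 1"
begin

definition Phi :: "real \<Rightarrow> real \<Rightarrow> real" where
  "Phi lam c = p * H (mfun u lam c) - (1 - p) * H (mmfun v lam c)"

definition aa where "aa = sl / (1 - sl)"
definition bb where "bb = sh / (1 - sh)"
definition al where "al = max u v * aa"
definition be where "be = min u v * bb"

lemma aa0: "aa > 0" using sl0 slsh sh1 by (simp add: aa_def)
lemma aabb: "aa < bb"
proof -
  have "sl * (1 - sh) < sh * (1 - sl)" using slsh by (simp add: algebra_simps)
  moreover have "1 - sl > 0" "1 - sh > 0" using slsh sh1 by auto
  ultimately show ?thesis unfolding aa_def bb_def by (simp add: divide_less_eq less_divide_eq mult.commute)
qed

lemma sl1: "sl < 1" using slsh sh1 by simp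

lemma m0_I_iff: "lam > 0 \<Longrightarrow> w > 0 \<Longrightarrow> lam / (lam + w) \<in> {sl<..<sh} \<longleftrightarrow> w * aa < lam \<and> lam < w * bb"
  using frac_gt_iff[of lam w sl] frac_lt_iff[of lam w sh] sl0 sl1 slsh sh1 unfolding aa_def bb_def by auto

lemma m0_cI_iff: "lam > 0 \<Longrightarrow> w > 0 \<Longrightarrow> lam / (lam + w) \<in> {sl..sh} \<longleftrightarrow> w * aa \<le> lam \<and> lam \<le> w * bb"
  using frac_ge_iff[of lam w sl] frac_le_iff[of lam w sh]
    sl0 sl1 slsh sh1 unfolding aa_def bb_def by auto

lemma E0_eq: "Eset sl sh u v 0 = {al<..<be}"
proof -
  have "lam \<in> Eset sl sh u v 0 \<longleftrightarrow> lam \<in> {al<..<be}" for lam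
  proof (cases "lam > 0")
    case True
    have A: "lam / (lam + u) \<in> {sl<..<sh} \<longleftrightarrow> u * aa < lam \<and> lam < u * bb" using m0_I_iff[OF True u0] .
    have B: "lam / (lam + v) \<in> {sl<..<sh} \<longleftrightarrow> v * aa < lam \<and> lam < v * bb" using m0_I_iff[OF True v0] .
    have C: "max u v * aa < lam \<longleftrightarrow> u * aa < lam \<and> v * aa < lam"
    proof -
      have "u \<le> v \<Longrightarrow> u * aa \<le> v * aa" "v \<le> u \<Longrightarrow> v * aa \<le> u * aa" using aa0 by (simp_all add: mult_right_mono)
      then show ?thesis by (auto simp: max_def)
    qed
    have D: "lam < min u v * bb \<longleftrightarrow> lam < u * bb \<and> lam < v * bb"
    proof -
      have "u \<le> v \<Longrightarrow> u * bb \<le> v * bb" "v \<le> u \<Longrightarrow> v * bb \<le> u * bb" using aa0 aabb by (simp_all add: mult_right_mono)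
      then show ?thesis by (auto simp: min_def)
    qed
    show ?thesis unfolding Eset_def m0 mm0 al_def be_def using True A B C D by auto
  next
    case False
    then have "lam \<le> 0" by simp
    moreover have "al > 0" using aa0 u0 v0 by (simp add: al_def)
    ultimately show ?thesis unfolding Eset_def by auto
  qed
  then show ?thesis by blast
qed

lemma al_be: "al < be" using E0ne E0_eq by auto
lemma al0: "al > 0" using aa0 u0 v0 by (simp add: al_def)

end

lemma cext_eq: "cext g S \<Longrightarrow> (\<And>x. g x = h x) \<Longrightarrow> cext h S"
proof -
  assume "cext g S" "\<And>x. g x = h x"
  then have "g = h" by auto
  then show "cext h S" using \<open>cext g S\<close> by simp
qed

lemma cext_moeb:
  fixes A1 B1 A2 B2 :: real
  assumes "cext g T" "\<And>y. y \<in> S \<Longrightarrow> A2 * y + B2 \<noteq> 0"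
    "\<And>y. y \<in> S \<Longrightarrow> (A1 * y + B1) / (A2 * y + B2) \<in> T"
  shows "cext (\<lambda>y. g ((A1 * y + B1) / (A2 * y + B2))) S"
proof (rule cext_compose[OF assms(1)])
  define W where "W = {z. complex_of_real A2 * z + complex_of_real B2 \<noteq> 0}"
  show "open W" unfolding W_def
    by (rule open_Collect_neq) (auto intro!: continuous_intros)
  show "(\<lambda>z. (complex_of_real A1 * z + complex_of_real B1) / (complex_of_real A2 * z + complex_of_real B2)) holomorphic_on W"
    unfolding W_def by (rule holomorphic_on_divide) (auto intro!: holomorphic_intros)
  show "complex_of_real x \<in> W" if "x \<in> S" for x
  proof -
    have "complex_of_real (A2 * x + B2) \<noteq> 0" using assms(2)[OF that] of_real_eq_0_iff by blast
    then show ?thesis unfolding W_def by (simp only: mem_Collect_eq of_real_mult[symmetric] of_real_add[symmetric] not_False_eq_True)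
  qed
  show "(complex_of_real A1 * complex_of_real y + complex_of_real B1) / (complex_of_real A2 * complex_of_real y + complex_of_real B2)
        = complex_of_real ((A1 * y + B1) / (A2 * y + B2))" for y
    by simp
  show "(A1 * x + B1) / (A2 * x + B2) \<in> T" if "x \<in> S" for x using assms(3) that .
qed

lemma mfun_lam: "mfun u lam c = ((1 + c) * lam + 0) / ((1 + c) * lam + (u - c))"
  unfolding mfun_def by (simp add: algebra_simps)
lemma mmfun_lam: "mmfun v lam c = ((1 - c) * lam + 0) / ((1 - c) * lam + (v + c))"
  unfolding mmfun_def by (simp add: algebra_simps)
lemma mfun_c: "mfun u lam c = (lam * c + lam) / ((lam - 1) * c + (lam + u))"
  unfolding mfun_def by (simp add: algebra_simps)
lemma mmfun_c: "mmfun v lam c = ((- lam) * c + lam) / ((1 - lam) * c + (lam + v))"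
  unfolding mmfun_def by (simp add: algebra_simps)

context mainl begin

lemma cext_Phi_lam:
  assumes "\<And>lam. lam \<in> S \<Longrightarrow> (1 + c) * lam + (u - c) \<noteq> 0"
    "\<And>lam. lam \<in> S \<Longrightarrow> (1 - c) * lam + (v + c) \<noteq> 0"
    "\<And>lam. lam \<in> S \<Longrightarrow> mfun u lam c \<in> {sl<..<sh}"
    "\<And>lam. lam \<in> S \<Longrightarrow> mmfun v lam c \<in> {sl<..<sh}"
  shows "cext (\<lambda>lam. Phi lam c) S"
proof -
  have c1: "cext (\<lambda>lam. H (((1 + c) * lam + 0) / ((1 + c) * lam + (u - c)))) S"
    by (rule cext_moeb[OF cext_Hf]) (use assms(1) in simp, metis assms(3) mfun_lam)
  have c2: "cext (\<lambda>lam. H (((1 - c) * lam + 0) / ((1 - c) * lam + (v + c)))) S"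
    by (rule cext_moeb[OF cext_Hf]) (use assms(2) in simp, metis assms(4) mmfun_lam)
  from cext_lin[OF c1 c2, of p "-(1-p)"] show ?thesis
    by (rule cext_eq) (simp add: Phi_def mfun_lam mmfun_lam algebra_simps)
qed

lemma cext_Phi_c:
  assumes "\<And>c. c \<in> S \<Longrightarrow> (lam - 1) * c + (lam + u) \<noteq> 0"
    "\<And>c. c \<in> S \<Longrightarrow> (1 - lam) * c + (lam + v) \<noteq> 0"
    "\<And>c. c \<in> S \<Longrightarrow> mfun u lam c \<in> {sl<..<sh}"
    "\<And>c. c \<in> S \<Longrightarrow> mmfun v lam c \<in> {sl<..<sh}"
  shows "cext (\<lambda>c. Phi lam c) S"
proof -
  have c1: "cext (\<lambda>c. H ((lam * c + lam) / ((lam - 1) * c + (lam + u)))) S"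
    by (rule cext_moeb[OF cext_Hf]) (use assms(1) in simp, metis assms(3) mfun_c)
  have c2: "cext (\<lambda>c. H (((- lam) * c + lam) / ((1 - lam) * c + (lam + v)))) S"
    by (rule cext_moeb[OF cext_Hf]) (use assms(2) in simp, metis assms(4) mmfun_c)
  from cext_lin[OF c1 c2, of p "-(1-p)"] show ?thesis
    by (rule cext_eq) (simp add: Phi_def mfun_c mmfun_c algebra_simps)
qed

end

context mainl begin

lemma bb0: "bb > 0" using aa0 aabb by simp

lemma al_cases: "(u > v \<and> al = u * aa \<and> be = v * bb) \<or> (u < v \<and> al = v * aa \<and> be = u * bb)"
  using uv unfolding al_def be_def by (auto simp: max_def min_def)

lemma m0_eq_sl: "lam > 0 \<Longrightarrow> w > 0 \<Longrightarrow> lam = w * aa \<Longrightarrow> lam / (lam + w) = sl"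
  using frac_eq_iff[of lam w sl] sl0 sl1 unfolding aa_def by auto
lemma m0_eq_sh: "lam > 0 \<Longrightarrow> w > 0 \<Longrightarrow> lam = w * bb \<Longrightarrow> lam / (lam + w) = sh"
  using frac_eq_iff[of lam w sh] sl0 slsh sh1 unfolding bb_def by auto

lemma Phi0_eq: "Phi lam 0 = p * H (lam / (lam + u)) - (1 - p) * H (lam / (lam + v))"
  unfolding Phi_def m0 mm0 ..

lemma Phi_al: "Phi al 0 \<noteq> 0"
proof -
  have be_gt: "al < be" by (rule al_be)
  from al_cases show ?thesis
  proof
    assume a: "v < u \<and> al = u * aa \<and> be = v * bb"
    have "al / (al + u) = sl" using a al0 u0 by (intro m0_eq_sl) auto
    moreover have "al / (al + v) \<in> {sl<..<sh}"
    proof -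
      have "v * aa < al" using a aa0 by simp
      moreover have "al < v * bb" using a be_gt by simp
      ultimately show ?thesis using m0_I_iff[of al v] al0 v0 by simp
    qed
    ultimately have "Phi al 0 = - ((1 - p) * H (al / (al + v)))" "H (al / (al + v)) > 0"
      using H_sl H_pos unfolding Phi0_eq by auto
    then show ?thesis using p1 by simp
  next
    assume a: "u < v \<and> al = v * aa \<and> be = u * bb"
    have "al / (al + v) = sl" using a al0 v0 by (intro m0_eq_sl) auto
    moreover have "al / (al + u) \<in> {sl<..<sh}"
    proof -
      have "u * aa < al" using a aa0 by simp
      moreover have "al < u * bb" using a be_gt by simp
      ultimately show ?thesis using m0_I_iff[of al u] al0 u0 by simp
    qed
    ultimately have "Phi al 0 = p * H (al / (al + u))" "H (al / (al + u)) > 0"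
      using H_sl H_pos unfolding Phi0_eq by auto
    then show ?thesis using p0 by simp
  qed
qed

lemma Phi_be: "Phi be 0 \<noteq> 0"
proof -
  have be_gt: "al < be" by (rule al_be)
  have be0: "be > 0" using al0 be_gt by simp
  from al_cases show ?thesis
  proof
    assume a: "v < u \<and> al = u * aa \<and> be = v * bb"
    have "be / (be + v) = sh" using a be0 v0 by (intro m0_eq_sh) auto
    moreover have "be / (be + u) \<in> {sl<..<sh}"
    proof -
      have "u * aa < be" using a be_gt by simp
      moreover have "be < u * bb" using a bb0 by simp
      ultimately show ?thesis using m0_I_iff[of be u] be0 u0 by simp
    qed
    ultimately have "Phi be 0 = p * H (be / (be + u))" "H (be / (be + u)) > 0"
      using H_sh H_pos unfolding Phi0_eq by auto
    then show ?thesis using p0 by simp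
  next
    assume a: "u < v \<and> al = v * aa \<and> be = u * bb"
    have "be / (be + u) = sh" using a be0 u0 by (intro m0_eq_sh) auto
    moreover have "be / (be + v) \<in> {sl<..<sh}"
    proof -
      have "v * aa < be" using a be_gt by simp
      moreover have "be < v * bb" using a bb0 by simp
      ultimately show ?thesis using m0_I_iff[of be v] be0 v0 by simp
    qed
    ultimately have "Phi be 0 = - ((1 - p) * H (be / (be + v)))" "H (be / (be + v)) > 0"
      using H_sh H_pos unfolding Phi0_eq by auto
    then show ?thesis using p1 by simp
  qed
qed

lemma lam_box:
  assumes "lam \<in> {al..be}"
  shows "lam / (lam + u) \<in> {sl..sh}" "lam / (lam + v) \<in> {sl..sh}"
proof -
  have l0: "lam > 0" using assms al0 by simp
  have "u * aa \<le> al" "v * aa \<le> al" "be \<le> u * bb" "be \<le> v * bb"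
    unfolding al_def be_def using aa0 bb0 by (auto simp: max_def min_def mult_right_mono)
  then show "lam / (lam + u) \<in> {sl..sh}" "lam / (lam + v) \<in> {sl..sh}"
    using m0_cI_iff[OF l0 u0] m0_cI_iff[OF l0 v0] assms by auto
qed

lemma Phi0_cont: "continuous_on {al..be} (\<lambda>lam. Phi lam 0)"
proof -
  have d: "\<And>lam w. lam \<in> {al..be} \<Longrightarrow> w > 0 \<Longrightarrow> lam + w \<noteq> 0" using al0 by fastforce
  have c1: "continuous_on {al..be} (\<lambda>lam. lam / (lam + u))"
    by (intro continuous_intros) (use d u0 in auto)
  have c2: "continuous_on {al..be} (\<lambda>lam. lam / (lam + v))"
    by (intro continuous_intros) (use d v0 in auto)
  have h1: "continuous_on {al..be} (\<lambda>lam. H (lam / (lam + u)))"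
    by (rule continuous_on_compose2[OF H_cont c1]) (use lam_box in auto)
  have h2: "continuous_on {al..be} (\<lambda>lam. H (lam / (lam + v)))"
    by (rule continuous_on_compose2[OF H_cont c2]) (use lam_box in auto)
  show ?thesis unfolding Phi0_eq by (intro continuous_intros h1 h2)
qed

lemma Phi0_nz: "\<exists>lam\<in>{al<..<be}. Phi lam 0 \<noteq> 0"
proof -
  have alin: "al \<in> {al..be}" using al_be by simp
  obtain d where d: "d > 0" "\<And>x. x \<in> {al..be} \<Longrightarrow> dist x al < d \<Longrightarrow> dist (Phi x 0) (Phi al 0) < \<bar>Phi al 0\<bar>"
    using Phi0_cont alin Phi_al unfolding continuous_on_iff by (metis zero_less_abs_iff)
  define t where "t = min d (be - al)"
  define x where "x = al + t / 2"
  have m: "t > 0" "t \<le> be - al" "t \<le> d" using d al_be unfolding t_def by auto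
  have "al < x" "x < be" using m unfolding x_def by linarith+
  moreover have "dist x al < d" using m unfolding x_def dist_real_def by simp
  ultimately have x: "x \<in> {al<..<be}" "dist x al < d" by auto
  then have "dist (Phi x 0) (Phi al 0) < \<bar>Phi al 0\<bar>" using d(2) by auto
  then have "Phi x 0 \<noteq> 0" by (auto simp: dist_real_def)
  then show ?thesis using x by blast
qed

lemma Z_countable: "countable {lam\<in>{al<..<be}. Phi lam 0 = 0}"
proof -
  have ce: "cext (\<lambda>lam. Phi lam 0) {al<..<be}"
  proof (rule cext_Phi_lam)
    fix lam assume l: "lam \<in> {al<..<be}"
    then have l0: "lam > 0" using al0 by auto
    show "(1 + 0) * lam + (u - 0) \<noteq> 0" "(1 - 0) * lam + (v + 0) \<noteq> 0" using l0 u0 v0 by auto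
    have "lam \<in> Eset sl sh u v 0" using l by (simp only: E0_eq)
    then show "mfun u lam 0 \<in> {sl<..<sh}" "mmfun v lam 0 \<in> {sl<..<sh}"
      unfolding Eset_def by auto
  qed
  obtain x0 where "x0 \<in> {al<..<be}" "Phi x0 0 \<noteq> 0" using Phi0_nz by blast
  from cext_zeros_countable[OF ce open_greaterThanLessThan connected_Ioo this] show ?thesis .
qed

lemma boundary:
  assumes "lam \<in> {al..be}" "Phi lam 0 = 0"
  shows "lam \<in> {al<..<be}"
  using assms Phi_al Phi_be by (cases "lam = al"; cases "lam = be") auto

end

context mainl begin

definition cl where "cl = max (-1) (-v)"
definition cu where "cu = min u 1"
definition D where "D lam = {c. cl < c \<and> c < cu \<and> mfun u lam c \<in> {sl<..<sh} \<and> mmfun v lam c \<in> {sl<..<sh}}"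

lemma cl0: "cl < 0" using v0 unfolding cl_def by simp
lemma cu0: "0 < cu" using u0 unfolding cu_def by simp

lemma in_cc: "c \<in> {cl..cu} \<Longrightarrow> -1 \<le> c \<and> c \<le> u \<and> -v \<le> c \<and> c \<le> 1"
  unfolding cl_def cu_def by auto

lemma m_mono_c: "lam > 0 \<Longrightarrow> cl \<le> c1 \<Longrightarrow> c1 < c2 \<Longrightarrow> c2 \<le> cu \<Longrightarrow> mfun u lam c1 < mfun u lam c2"
  using m_strict_mono[of lam u c1 c2] in_cc[of c1] in_cc[of c2] u0 by auto

lemma mm_anti_c: "lam > 0 \<Longrightarrow> cl \<le> c1 \<Longrightarrow> c1 < c2 \<Longrightarrow> c2 \<le> cu \<Longrightarrow> mmfun v lam c2 < mmfun v lam c1"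
  using mm_strict_anti[of lam v c1 c2] in_cc[of c1] in_cc[of c2] v0 by auto

lemma m_mono_c_le: "lam > 0 \<Longrightarrow> cl \<le> c1 \<Longrightarrow> c1 \<le> c2 \<Longrightarrow> c2 \<le> cu \<Longrightarrow> mfun u lam c1 \<le> mfun u lam c2"
  using m_mono_c[of lam c1 c2] by (cases "c1 = c2") auto

lemma mm_anti_c_le: "lam > 0 \<Longrightarrow> cl \<le> c1 \<Longrightarrow> c1 \<le> c2 \<Longrightarrow> c2 \<le> cu \<Longrightarrow> mmfun v lam c2 \<le> mmfun v lam c1"
  using mm_anti_c[of lam c1 c2] by (cases "c1 = c2") auto

lemma m_cont_c: "lam > 0 \<Longrightarrow> continuous_on {cl..cu} (mfun u lam)"
proof -
  assume l: "lam > 0"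
  have "\<And>c. c \<in> {cl..cu} \<Longrightarrow> lam * (1 + c) + (u - c) \<noteq> 0"
    using den_m_pos[OF l u0] in_cc by force
  then show ?thesis unfolding mfun_def[abs_def] by (intro continuous_intros) auto
qed

lemma mm_cont_c: "lam > 0 \<Longrightarrow> continuous_on {cl..cu} (mmfun v lam)"
proof -
  assume l: "lam > 0"
  have "\<And>c. c \<in> {cl..cu} \<Longrightarrow> lam * (1 - c) + (v + c) \<noteq> 0"
    using den_mm_pos[OF l v0] in_cc by force
  then show ?thesis unfolding mmfun_def[abs_def] by (intro continuous_intros) auto
qed

lemma d_cl: "lam > 0 \<Longrightarrow> mfun u lam cl < mmfun v lam cl"
proof -
  assume l: "lam > 0"
  show ?thesis
  proof (cases "v \<ge> 1")
    case True
    then have c: "cl = -1" unfolding cl_def by simp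
    have "mfun u lam cl = 0" unfolding c mfun_def by simp
    moreover have "mmfun v lam cl > 0" unfolding c mmfun_def using l True by (simp add: add_pos_nonneg)
    ultimately show ?thesis by simp
  next
    case False
    then have c: "cl = -v" unfolding cl_def by simp
    have "mmfun v lam cl = 1" unfolding c mmfun_def using l v0 False by simp
    moreover have "mfun u lam cl < 1" unfolding c mfun_def using l u0 v0 False
      by (simp add: divide_less_eq add_pos_pos)
    ultimately show ?thesis by simp
  qed
qed

lemma d_cu: "lam > 0 \<Longrightarrow> mmfun v lam cu < mfun u lam cu"
proof -
  assume l: "lam > 0"
  show ?thesis
  proof (cases "u \<ge> 1")
    case True
    then have c: "cu = 1" unfolding cu_def by simp
    have "mmfun v lam cu = 0" unfolding c mmfun_def by simp
    moreover have "mfun u lam cu > 0" unfolding c mfun_def using l True by (simp add: add_pos_nonneg)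
    ultimately show ?thesis by simp
  next
    case False
    then have c: "cu = u" unfolding cu_def by simp
    have "mfun u lam cu = 1" unfolding c mfun_def using l u0 False by simp
    moreover have "mmfun v lam cu < 1" unfolding c mmfun_def using l u0 v0 False
      by (simp add: divide_less_eq add_pos_pos)
    ultimately show ?thesis by simp
  qed
qed

lemma cstar:
  assumes lam: "lam \<in> {al<..<be}"
  shows "\<exists>c\<in>D lam. mfun u lam c = mmfun v lam c"
proof -
  have l: "lam > 0" using lam al0 by simp
  have E: "mfun u lam 0 \<in> {sl<..<sh}" "mmfun v lam 0 \<in> {sl<..<sh}"
  proof -
    have "lam \<in> Eset sl sh u v 0" using lam by (simp only: E0_eq)
    then show "mfun u lam 0 \<in> {sl<..<sh}" "mmfun v lam 0 \<in> {sl<..<sh}" unfolding Eset_def by auto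
  qed
  have ne0: "mfun u lam 0 \<noteq> mmfun v lam 0"
    unfolding m0 mm0 using l u0 v0 uv by (simp add: field_simps)
  define d where "d = (\<lambda>c. mfun u lam c - mmfun v lam c)"
  have dc: "continuous_on {cl..cu} d" unfolding d_def
    by (intro continuous_intros m_cont_c[OF l] mm_cont_c[OF l])
  obtain cs where cs: "cl \<le> cs" "cs \<le> cu" "d cs = 0"
    using IVT'[of d cl 0 cu, OF _ _ _ dc] d_cl[OF l] d_cu[OF l] cl0 cu0 unfolding d_def by force
  have eq: "mfun u lam cs = mmfun v lam cs" using cs(3) unfolding d_def by simp
  have "cs \<noteq> cl" using eq d_cl[OF l] by auto
  moreover have "cs \<noteq> cu" using eq d_cu[OF l] by auto
  ultimately have cs2: "cl < cs" "cs < cu" using cs by auto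
  have "cs \<noteq> 0" using eq ne0 by auto
  then have "mfun u lam cs \<in> {sl<..<sh}"
  proof (cases "cs < 0")
    case True
    have "mfun u lam cs < mfun u lam 0" using m_mono_c[OF l, of cs 0] cs2 True cu0 by auto
    moreover have "mmfun v lam 0 < mmfun v lam cs" using mm_anti_c[OF l, of cs 0] cs2 True cu0 by auto
    ultimately show ?thesis using E eq by auto
  next
    case False
    then have "cs > 0" using \<open>cs \<noteq> 0\<close> by simp
    have "mfun u lam 0 < mfun u lam cs" using m_mono_c[OF l, of 0 cs] cs2 \<open>cs > 0\<close> cl0 by auto
    moreover have "mmfun v lam cs < mmfun v lam 0" using mm_anti_c[OF l, of 0 cs] cs2 \<open>cs > 0\<close> cl0 by auto
    ultimately show ?thesis using E eq by auto
  qed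
  then have "cs \<in> D lam" using cs2 eq unfolding D_def by auto
  then show ?thesis using eq by blast
qed

end

context mainl begin

lemma D_open: "lam > 0 \<Longrightarrow> open (D lam)"
proof -
  assume l: "lam > 0"
  have c: "continuous_on {cl<..<cu} (\<lambda>c. (mfun u lam c, mmfun v lam c))"
    using m_cont_c[OF l] mm_cont_c[OF l]
    by (intro continuous_intros) (auto elim: continuous_on_subset)
  have "D lam = {cl<..<cu} \<inter> (\<lambda>c. (mfun u lam c, mmfun v lam c)) -` ({sl<..<sh} \<times> {sl<..<sh})"
    unfolding D_def by auto
  then show ?thesis
    using continuous_open_preimage[OF c open_greaterThanLessThan open_Times[OF open_greaterThanLessThan open_greaterThanLessThan]]
    by simp
qed

lemma D_conn: "lam > 0 \<Longrightarrow> connected (D lam)"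
proof -
  assume l: "lam > 0"
  have "is_interval (D lam)" unfolding is_interval_1
  proof (intro ballI allI impI)
    fix a b x assume a: "a \<in> D lam" and b: "b \<in> D lam" and x: "a \<le> x \<and> x \<le> b"
    have r: "cl < a" "b < cu" using a b unfolding D_def by auto
    have "mfun u lam a \<le> mfun u lam x" "mfun u lam x \<le> mfun u lam b"
      using m_mono_c_le[OF l, of a x] m_mono_c_le[OF l, of x b] r x by auto
    moreover have "mmfun v lam x \<le> mmfun v lam a" "mmfun v lam b \<le> mmfun v lam x"
      using mm_anti_c_le[OF l, of a x] mm_anti_c_le[OF l, of x b] r x by auto
    ultimately show "x \<in> D lam" using a b x r unfolding D_def by auto
  qed
  then show ?thesis by (rule is_interval_connected)
qed

lemma D_sub: "c \<in> D lam \<Longrightarrow> c \<in> {cl..cu}" unfolding D_def by auto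

lemma D_cext: "lam > 0 \<Longrightarrow> cext (\<lambda>c. Phi lam c) (D lam)"
proof -
  assume l: "lam > 0"
  show ?thesis
  proof (rule cext_Phi_c)
    fix c assume c: "c \<in> D lam"
    then have cc: "-1 \<le> c \<and> c \<le> u \<and> -v \<le> c \<and> c \<le> 1" using in_cc D_sub by blast
    have "lam * (1 + c) + (u - c) > 0" using den_m_pos[OF l u0] cc by auto
    then show "(lam - 1) * c + (lam + u) \<noteq> 0" by (simp add: algebra_simps)
    have "lam * (1 - c) + (v + c) > 0" using den_mm_pos[OF l v0] cc by auto
    then show "(1 - lam) * c + (lam + v) \<noteq> 0" by (simp add: algebra_simps)
    show "mfun u lam c \<in> {sl<..<sh}" "mmfun v lam c \<in> {sl<..<sh}" using c unfolding D_def by auto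
  qed
qed

lemma DI: "c \<in> D lam \<Longrightarrow> mfun u lam c \<in> {sl..sh} \<and> mmfun v lam c \<in> {sl..sh}"
  unfolding D_def by auto

lemma half_contra:
  assumes lam: "lam \<in> {al<..<be}" and hyp: "\<And>c. c \<in> D lam \<Longrightarrow> H (mfun u lam c) = H (mmfun v lam c)"
  shows False
proof -
  have l: "lam > 0" using lam al0 by simp
  obtain cs where cs: "cs \<in> D lam" "mfun u lam cs = mmfun v lam cs" using cstar[OF lam] by blast
  define xs where "xs = mfun u lam cs"
  obtain r where r: "r > 0" "ball cs r \<subseteq> D lam" using D_open[OF l] cs(1) open_contains_ball by blast
  define rh where "rh = r / 2"
  have rh: "rh > 0" "rh < r" using r unfolding rh_def by auto
  have inD: "c \<in> D lam" if "\<bar>c - cs\<bar> \<le> rh" for c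
    using that rh r(2) by (auto simp: dist_real_def abs_minus_commute subset_iff)
  have csD: "cl < cs" "cs < cu" using cs(1) unfolding D_def by auto
  have mmcont: "isCont (mmfun v lam) cs"
    using continuous_on_interior[OF mm_cont_c[OF l]] csD by (simp add: interior_atLeastAtMost_real)
  have mcont: "continuous_on {cs..cs + rh} (mfun u lam)"
  proof (rule continuous_on_subset[OF m_cont_c[OF l]])
    show "{cs..cs + rh} \<subseteq> {cl..cu}" using inD[of "cs + rh"] csD D_sub by force
  qed
  have mono: "mfun u lam c1 < mfun u lam c2" "mmfun v lam c2 < mmfun v lam c1"
    if "c1 \<in> D lam" "c2 \<in> D lam" "c1 < c2" for c1 c2
    using m_mono_c[OF l, of c1 c2] mm_anti_c[OF l, of c1 c2] that D_sub by force+
  have eps: "\<exists>c. cs - rh \<le> c \<and> c < cs \<and> \<bar>mmfun v lam c - xs\<bar> < e" if "e > 0" for e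
  proof -
    obtain dl where dl: "dl > 0" "\<And>c. \<bar>c - cs\<bar> < dl \<Longrightarrow> \<bar>mmfun v lam c - mmfun v lam cs\<bar> < e"
      using mmcont \<open>e > 0\<close> unfolding continuous_at_eps_delta dist_real_def by blast
    define c where "c = cs - min dl rh / 2"
    have "min dl rh > 0" "min dl rh \<le> dl" "min dl rh \<le> rh" using dl rh by auto
    then have "cs - rh \<le> c" "c < cs" "\<bar>c - cs\<bar> < dl" unfolding c_def by auto
    then show ?thesis using dl(2) cs(2) unfolding xs_def by auto
  qed
  have eps': "\<exists>c. cs < c \<and> c \<le> cs + rh \<and> \<bar>mmfun v lam c - xs\<bar> < e" if "e > 0" for e
  proof -
    obtain dl where dl: "dl > 0" "\<And>c. \<bar>c - cs\<bar> < dl \<Longrightarrow> \<bar>mmfun v lam c - mmfun v lam cs\<bar> < e"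
      using mmcont \<open>e > 0\<close> unfolding continuous_at_eps_delta dist_real_def by blast
    define c where "c = cs + min dl rh / 2"
    have "min dl rh > 0" "min dl rh \<le> dl" "min dl rh \<le> rh" using dl rh by auto
    then have "cs < c" "c \<le> cs + rh" "\<bar>c - cs\<bar> < dl" unfolding c_def by auto
    then show ?thesis using dl(2) cs(2) unfolding xs_def by auto
  qed
  consider "xs < 1/2" | "xs > 1/2" | "xs = 1/2" by linarith
  then show False
  proof cases
    case 1
    then obtain c1 where c1: "cs - rh \<le> c1" "c1 < cs" "\<bar>mmfun v lam c1 - xs\<bar> < 1/2 - xs"
      using eps[of "1/2 - xs"] by auto
    have c1D: "c1 \<in> D lam" using c1 by (intro inD) auto
    have a: "mfun u lam c1 < xs" "xs < mmfun v lam c1"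
      using mono[OF c1D cs(1) c1(2)] cs(2) unfolding xs_def by auto
    have "mmfun v lam c1 < 1/2" using c1(3) by auto
    then have "mfun u lam c1 = mmfun v lam c1"
      using H_inj_left[of "mfun u lam c1" "mmfun v lam c1"] DI[OF c1D] hyp[OF c1D] a 1 by auto
    then show False using a by simp
  next
    case 2
    then obtain c1 where c1: "cs < c1" "c1 \<le> cs + rh" "\<bar>mmfun v lam c1 - xs\<bar> < xs - 1/2"
      using eps'[of "xs - 1/2"] by auto
    have c1D: "c1 \<in> D lam" using c1 by (intro inD) auto
    have a: "xs < mfun u lam c1" "mmfun v lam c1 < xs"
      using mono[OF cs(1) c1D c1(1)] cs(2) unfolding xs_def by auto
    have "mmfun v lam c1 > 1/2" using c1(3) by auto
    then have "mfun u lam c1 = mmfun v lam c1"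
      using H_inj_right[of "mfun u lam c1" "mmfun v lam c1"] DI[OF c1D] hyp[OF c1D] a 2 by auto
    then show False using a by simp
  next
    case 3
    have csrD: "cs + rh \<in> D lam" using rh by (intro inD) auto
    have mr: "xs < mfun u lam (cs + rh)" using mono[OF cs(1) csrD] rh unfolding xs_def by auto
    obtain c1 where c1: "cs - rh \<le> c1" "c1 < cs" "\<bar>mmfun v lam c1 - xs\<bar> < mfun u lam (cs + rh) - xs"
      using eps[of "mfun u lam (cs + rh) - xs"] mr by auto
    have c1D: "c1 \<in> D lam" using c1 by (intro inD) auto
    have a: "mfun u lam c1 < xs" "xs < mmfun v lam c1"
      using mono[OF c1D cs(1) c1(2)] cs(2) unfolding xs_def by auto
    have b: "mmfun v lam c1 < mfun u lam (cs + rh)" using c1(3) by auto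
    obtain c2 where c2: "cs \<le> c2" "c2 \<le> cs + rh" "mfun u lam c2 = mmfun v lam c1"
      using IVT'[of "mfun u lam" cs "mmfun v lam c1" "cs + rh", OF _ _ _ mcont] a b rh
      unfolding xs_def by auto
    have c2D: "c2 \<in> D lam" using c2 rh by (intro inD) auto
    have "c2 \<noteq> cs" using c2(3) a unfolding xs_def by auto
    then have c2gt: "cs < c2" using c2 by simp
    have mm2: "mmfun v lam c2 < xs" using mono[OF cs(1) c2D c2gt] cs(2) unfolding xs_def by auto
    have "H (mmfun v lam c2) = H (mfun u lam c1)"
      using hyp[OF c2D] hyp[OF c1D] c2(3) by simp
    then have sw: "mmfun v lam c2 = mfun u lam c1"
      using H_inj_left[of "mmfun v lam c2" "mfun u lam c1"] DI[OF c1D] DI[OF c2D] a mm2 3 by auto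
    have den: "lam * (1 + c) + (u - c) > 0" "lam * (1 - c) + (v + c) > 0" if "c \<in> D lam" for c
      using den_m_pos[OF l u0] den_mm_pos[OF l v0] in_cc[OF D_sub[OF that]] by auto
    have "c1 = c2"
      using m_swap_eq[OF l uv den(1)[OF c1D] den(1)[OF c2D] den(2)[OF c1D] den(2)[OF c2D] c2(3) sw] .
    then show False using c1(2) c2gt by simp
  qed
qed

lemma D_nz: "lam \<in> {al<..<be} \<Longrightarrow> \<exists>c\<in>D lam. Phi lam c \<noteq> 0"
proof -
  assume lam: "lam \<in> {al<..<be}"
  show ?thesis
  proof (cases "p = 1/2")
    case True
    show ?thesis
    proof (rule ccontr)
      assume nz: "\<not> ?thesis"
      have "H (mfun u lam c) = H (mmfun v lam c)" if "c \<in> D lam" for c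
      proof -
        have "Phi lam c = 0" using nz that by blast
        then show ?thesis unfolding Phi_def using True by simp
      qed
      then show False using half_contra[OF lam] by blast
    qed
  next
    case False
    obtain cs where cs: "cs \<in> D lam" "mfun u lam cs = mmfun v lam cs" using cstar[OF lam] by blast
    have "H (mfun u lam cs) > 0" using cs unfolding D_def by (intro H_pos) auto
    moreover have "Phi lam cs = (2 * p - 1) * H (mfun u lam cs)" unfolding Phi_def cs(2) by (simp add: algebra_simps)
    moreover have "2 * p - 1 \<noteq> 0" using False by simp
    ultimately have "Phi lam cs \<noteq> 0" by simp
    then show ?thesis using cs by blast
  qed
qed

end

lemma subsing_countable: "(\<And>x y. x \<in> A \<Longrightarrow> y \<in> A \<Longrightarrow> x = y) \<Longrightarrow> countable A"
proof (cases "A = {}")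
  case False
  assume h: "\<And>x y. x \<in> A \<Longrightarrow> y \<in> A \<Longrightarrow> x = y"
  obtain a where "a \<in> A" using False by blast
  then have "A \<subseteq> {a}" using h by blast
  then show ?thesis using countable_subset by blast
qed simp

context mainl begin

definition Qset where "Qset lam = {c \<in> {cl..cu}. mfun u lam c \<in> {sl..sh} \<and> mmfun v lam c \<in> {sl..sh} \<and> Phi lam c = 0}"

lemma m_inj: "lam > 0 \<Longrightarrow> c1 \<in> {cl..cu} \<Longrightarrow> c2 \<in> {cl..cu} \<Longrightarrow> mfun u lam c1 = mfun u lam c2 \<Longrightarrow> c1 = c2"
  using m_mono_c[of lam c1 c2] m_mono_c[of lam c2 c1] by (cases c1 c2 rule: linorder_cases) auto

lemma mm_inj: "lam > 0 \<Longrightarrow> c1 \<in> {cl..cu} \<Longrightarrow> c2 \<in> {cl..cu} \<Longrightarrow> mmfun v lam c1 = mmfun v lam c2 \<Longrightarrow> c1 = c2"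
  using mm_anti_c[of lam c1 c2] mm_anti_c[of lam c2 c1] by (cases c1 c2 rule: linorder_cases) auto

lemma Qset_countable:
  assumes lam: "lam \<in> {al<..<be}"
  shows "countable (Qset lam)"
proof -
  have l: "lam > 0" using lam al0 by simp
  have cD: "countable {c \<in> D lam. Phi lam c = 0}"
  proof -
    obtain c0 where "c0 \<in> D lam" "Phi lam c0 \<noteq> 0" using D_nz[OF lam] by blast
    from cext_zeros_countable[OF D_cext[OF l] D_open[OF l] D_conn[OF l] this] show ?thesis .
  qed
  have cm: "countable {c \<in> {cl..cu}. mfun u lam c = s}" for s
    by (rule subsing_countable) (use m_inj[OF l] in auto)
  have cmm: "countable {c \<in> {cl..cu}. mmfun v lam c = s}" for s
    by (rule subsing_countable) (use mm_inj[OF l] in auto)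
  have "Qset lam \<subseteq> {c \<in> D lam. Phi lam c = 0} \<union> {cl, cu} \<union>
      ({c \<in> {cl..cu}. mfun u lam c = sl} \<union> {c \<in> {cl..cu}. mfun u lam c = sh}) \<union>
      ({c \<in> {cl..cu}. mmfun v lam c = sl} \<union> {c \<in> {cl..cu}. mmfun v lam c = sh})"
    unfolding Qset_def D_def by auto
  moreover have "countable ({c \<in> D lam. Phi lam c = 0} \<union> {cl, cu} \<union>
      ({c \<in> {cl..cu}. mfun u lam c = sl} \<union> {c \<in> {cl..cu}. mfun u lam c = sh}) \<union>
      ({c \<in> {cl..cu}. mmfun v lam c = sl} \<union> {c \<in> {cl..cu}. mmfun v lam c = sh}))"
    using cD cm cmm by auto
  ultimately show ?thesis using countable_subset by blast
qed

definition Qall where "Qall = {c. \<exists>lam\<in>{al..be}. Phi lam 0 = 0 \<and> c \<in> Qset lam}"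

lemma Qall_countable: "countable Qall"
proof -
  have "Qall \<subseteq> (\<Union>lam\<in>{lam\<in>{al<..<be}. Phi lam 0 = 0}. Qset lam)"
    unfolding Qall_def using boundary by blast
  moreover have "countable (\<Union>lam\<in>{lam\<in>{al<..<be}. Phi lam 0 = 0}. Qset lam)"
    using Z_countable Qset_countable by (intro countable_UN) auto
  ultimately show ?thesis using countable_subset by blast
qed

end

context mainl begin

definition Box where "Box = {al..be} \<times> {cl..cu}"
definition K0 where "K0 = {z \<in> Box. mfun u (fst z) (snd z) \<in> {sl..sh} \<and> mmfun v (fst z) (snd z) \<in> {sl..sh}}"
definition K where "K d = {z \<in> K0. \<bar>Phi (fst z) 0\<bar> \<le> d \<and> \<bar>Phi (fst z) (snd z)\<bar> \<le> d}"
definition T where "T d = snd ` K d"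

lemma Box_props: "z \<in> Box \<Longrightarrow> fst z > 0 \<and> fst z \<in> {al..be} \<and> -1 \<le> snd z \<and> snd z \<le> u \<and> -v \<le> snd z \<and> snd z \<le> 1"
  unfolding Box_def using al0 in_cc by force

lemma M_cont: "continuous_on Box (\<lambda>z. (mfun u (fst z) (snd z), mmfun v (fst z) (snd z)))"
proof -
  have d1: "\<And>z. z \<in> Box \<Longrightarrow> fst z * (1 + snd z) + (u - snd z) \<noteq> 0"
    using den_m_pos Box_props u0 by (metis less_irrefl)
  have d2: "\<And>z. z \<in> Box \<Longrightarrow> fst z * (1 - snd z) + (v + snd z) \<noteq> 0"
    using den_mm_pos Box_props v0 by (metis less_irrefl)
  show ?thesis unfolding mfun_def mmfun_def
    by (intro continuous_intros) (use d1 d2 in auto)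
qed

lemma compact_Box: "compact Box" unfolding Box_def by (intro compact_Times compact_Icc)

lemma K0_closed: "closed K0"
proof -
  have "K0 = Box \<inter> (\<lambda>z. (mfun u (fst z) (snd z), mmfun v (fst z) (snd z))) -` ({sl..sh} \<times> {sl..sh})"
    unfolding K0_def by auto
  then show ?thesis
    using continuous_closed_preimage[OF M_cont compact_imp_closed[OF compact_Box] closed_Times[OF closed_atLeastAtMost closed_atLeastAtMost]]
    by simp
qed

lemma Phi_cont: "continuous_on K0 (\<lambda>z. (Phi (fst z) 0, Phi (fst z) (snd z)))"
proof -
  have KB: "K0 \<subseteq> Box" unfolding K0_def by auto
  have mc: "continuous_on K0 (\<lambda>z. mfun u (fst z) (snd z))" "continuous_on K0 (\<lambda>z. mmfun v (fst z) (snd z))"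
    using continuous_on_subset[OF M_cont KB] by (auto dest: continuous_on_fst continuous_on_snd)
  have f0: "\<And>z. z \<in> K0 \<Longrightarrow> fst z \<in> {al..be}" using KB Box_props by blast
  have m0c: "continuous_on K0 (\<lambda>z. fst z / (fst z + u))" "continuous_on K0 (\<lambda>z. fst z / (fst z + v))"
    using f0 al0 u0 v0 by (auto intro!: continuous_intros simp: add_pos_pos dest!: f0)
  have h1: "continuous_on K0 (\<lambda>z. H (mfun u (fst z) (snd z)))"
    by (rule continuous_on_compose2[OF H_cont mc(1)]) (auto simp: K0_def)
  have h2: "continuous_on K0 (\<lambda>z. H (mmfun v (fst z) (snd z)))"
    by (rule continuous_on_compose2[OF H_cont mc(2)]) (auto simp: K0_def)
  have h3: "continuous_on K0 (\<lambda>z. H (fst z / (fst z + u)))"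
    by (rule continuous_on_compose2[OF H_cont m0c(1)]) (use lam_box f0 in auto)
  have h4: "continuous_on K0 (\<lambda>z. H (fst z / (fst z + v)))"
    by (rule continuous_on_compose2[OF H_cont m0c(2)]) (use lam_box f0 in auto)
  show ?thesis unfolding Phi_def m0 mm0
    by (intro continuous_intros h1 h2 h3 h4)
qed

lemma K_compact: "compact (K d)"
proof -
  have "K d = K0 \<inter> (\<lambda>z. (Phi (fst z) 0, Phi (fst z) (snd z))) -` ({-d..d} \<times> {-d..d})"
    unfolding K_def by (auto simp: abs_le_iff)
  then have "closed (K d)"
    using continuous_closed_preimage[OF Phi_cont K0_closed closed_Times[OF closed_atLeastAtMost closed_atLeastAtMost]]
    by simp
  moreover have "K d = Box \<inter> K d" unfolding K_def K0_def by auto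
  ultimately show ?thesis using compact_Int_closed[OF compact_Box] by metis
qed

lemma T_compact: "compact (T d)"
  unfolding T_def by (rule compact_continuous_image[OF continuous_on_snd[OF continuous_on_id] K_compact])

lemma T_lmeas: "T d \<in> lmeasurable" by (rule lmeasurable_compact[OF T_compact])

lemma T_mono: "d1 \<le> d2 \<Longrightarrow> T d1 \<subseteq> T d2"
  unfolding T_def K_def by auto

lemma Phi_approx:
  assumes g: "g \<in> Finf sl sh" and e: "\<And>s. s \<in> {sl<..<sh} \<Longrightarrow> \<bar>f s - g s\<bar> < e"
    and de: "e * (1 / sl + 2) * (sh - sl) \<le> d"
    and mI: "mfun u lam c \<in> {sl..sh}" and mmI: "mmfun v lam c \<in> {sl..sh}"
    and G0: "Gf sl sh p u v g lam c = 0"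
  shows "\<bar>Phi lam c\<bar> \<le> d"
proof -
  define B where "B = e * (1 / sl + 2) * (sh - sl)"
  have a1: "\<bar>integral {sl..mfun u lam c} (\<lambda>s. g s * wt s) - H (mfun u lam c)\<bar> \<le> B"
    unfolding H_def B_def by (rule H_approx[OF fF g sl0 slsh mI e])
  have a2: "\<bar>integral {sl..mmfun v lam c} (\<lambda>s. g s * wt s) - H (mmfun v lam c)\<bar> \<le> B"
    unfolding H_def B_def by (rule H_approx[OF fF g sl0 slsh mmI e])
  have G: "p * integral {sl..mfun u lam c} (\<lambda>s. g s * wt s) - (1 - p) * integral {sl..mmfun v lam c} (\<lambda>s. g s * wt s) = 0"
    using G0 Gf_eq[OF g mmI] by simp
  define x1 where "x1 = integral {sl..mfun u lam c} (\<lambda>s. g s * wt s) - H (mfun u lam c)"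
  define x2 where "x2 = integral {sl..mmfun v lam c} (\<lambda>s. g s * wt s) - H (mmfun v lam c)"
  have eqP: "Phi lam c = - (p * x1 - (1 - p) * x2)"
    using G unfolding Phi_def x1_def x2_def by (simp add: algebra_simps)
  have "\<bar>Phi lam c\<bar> = \<bar>p * x1 - (1 - p) * x2\<bar>" unfolding eqP by (simp only: abs_minus_cancel)
  also have "\<dots> \<le> \<bar>p * x1\<bar> + \<bar>(1 - p) * x2\<bar>" by (rule abs_triangle_ineq4)
  also have "\<dots> = p * \<bar>x1\<bar> + (1 - p) * \<bar>x2\<bar>" using p0 p1 by (simp add: abs_mult)
  also have "\<dots> \<le> p * B + (1 - p) * B"
    using a1 a2 p0 p1 unfolding x1_def x2_def by (intro add_mono mult_left_mono) auto
  also have "\<dots> = B" by (simp add: algebra_simps)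
  finally show ?thesis using de unfolding B_def by simp
qed

lemma Sset_sub:
  assumes g: "g \<in> Finf sl sh" and e: "\<And>s. s \<in> {sl<..<sh} \<Longrightarrow> \<bar>f s - g s\<bar> < e"
    and de: "e * (1 / sl + 2) * (sh - sl) \<le> d"
  shows "Sset sl sh p u v eps0 g \<subseteq> T d"
proof
  fix c assume "c \<in> Sset sl sh p u v eps0 g"
  then obtain lam where c: "c \<in> Ceps sl sh u v eps0" and lam0: "lam \<in> Eset sl sh u v 0"
    and lamc: "lam \<in> Eset sl sh u v c" and G0: "Gf sl sh p u v g lam 0 = 0" and Gc: "Gf sl sh p u v g lam c = 0"
    unfolding Sset_def by blast
  have cc: "c \<in> {cl..cu}" using c eps0 unfolding Ceps_def cl_def cu_def by auto
  have la: "lam \<in> {al..be}" using lam0 E0_eq by auto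
  have mc: "mfun u lam c \<in> {sl..sh}" "mmfun v lam c \<in> {sl..sh}" using lamc unfolding Eset_def by auto
  have m0c: "mfun u lam 0 \<in> {sl..sh}" "mmfun v lam 0 \<in> {sl..sh}" using lam0 unfolding Eset_def by auto
  have "(lam, c) \<in> K0" unfolding K0_def Box_def using cc la mc by auto
  moreover have "\<bar>Phi lam 0\<bar> \<le> d" by (rule Phi_approx[OF g e de m0c G0])
  moreover have "\<bar>Phi lam c\<bar> \<le> d" by (rule Phi_approx[OF g e de mc Gc])
  ultimately have "(lam, c) \<in> K d" unfolding K_def by auto
  then show "c \<in> T d" unfolding T_def by force
qed

lemma small_zero: "(\<And>k::nat. \<bar>x::real\<bar> \<le> 1 / real (Suc k)) \<Longrightarrow> x = 0"
proof (rule ccontr)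
  assume h: "\<And>k::nat. \<bar>x\<bar> \<le> 1 / real (Suc k)" and "x \<noteq> 0"
  then have "\<bar>x\<bar> > 0" by simp
  then obtain m :: nat where m: "m > 0" "inverse (real m) < \<bar>x\<bar>" using ex_inverse_of_nat_less by blast
  have "Suc (m - 1) = m" using m by simp
  then have "\<bar>x\<bar> \<le> 1 / real m" using h[of "m - 1"] by simp
  then show False using m by (simp add: inverse_eq_divide)
qed

theorem main_result: "f \<notin> Linf_closure sl sh (Fn sl sh p u v eps0 n)"
proof
  assume fc: "f \<in> Linf_closure sl sh (Fn sl sh p u v eps0 n)"
  define B where "B = (1 / sl + 2) * (sh - sl)"
  have B0: "B > 0" unfolding B_def using sl0 slsh by (simp add: add_pos_pos)
  have Tge: "emeasure lebesgue (T d) \<ge> ennreal (1 / real n)" if "d > 0" for d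
  proof -
    have "d / B > 0" using that B0 by simp
    then obtain g where g: "g \<in> Fn sl sh p u v eps0 n" and ap: "\<And>s. s \<in> {sl<..<sh} \<Longrightarrow> \<bar>f s - g s\<bar> < d / B"
      using fc unfolding Linf_closure_def by blast
    have gF: "g \<in> Finf sl sh" and Sm: "Sset sl sh p u v eps0 g \<in> sets lebesgue"
      and Sge: "emeasure lebesgue (Sset sl sh p u v eps0 g) \<ge> ennreal (1 / real n)"
      using g unfolding Fn_def by auto
    have "d / B * (1 / sl + 2) * (sh - sl) = d / B * B" unfolding B_def by (simp add: mult.assoc)
    also have "\<dots> = d" using B0 by simp
    finally have "d / B * (1 / sl + 2) * (sh - sl) \<le> d" by simp
    from Sset_sub[OF gF ap this] have "Sset sl sh p u v eps0 g \<subseteq> T d" .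
    then have "emeasure lebesgue (Sset sl sh p u v eps0 g) \<le> emeasure lebesgue (T d)"
      using T_lmeas fmeasurableD by (intro emeasure_mono) auto
    then show ?thesis using Sge by simp
  qed
  define A where "A k = T (1 / real (Suc k))" for k
  have decA: "decseq A" unfolding decseq_def A_def
    by (intro allI impI T_mono) (simp add: frac_le)
  have "(INF k. emeasure lebesgue (A k)) = emeasure lebesgue (\<Inter>k. A k)"
  proof (rule INF_emeasure_decseq[OF _ decA])
    show "range A \<subseteq> sets lebesgue"
    proof
      fix x assume "x \<in> range A"
      then obtain i where "x = A i" by blast
      then show "x \<in> sets lebesgue" unfolding A_def by (simp only: fmeasurableD[OF T_lmeas])
    qed
    show "emeasure lebesgue (A i) \<noteq> \<infinity>" for i
      unfolding A_def infinity_ennreal_def by (rule fmeasurableD2[OF T_lmeas])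
  qed
  moreover have "(INF k. emeasure lebesgue (A k)) \<ge> ennreal (1 / real n)"
    unfolding A_def by (rule INF_greatest) (rule Tge, simp)
  ultimately have big: "emeasure lebesgue (\<Inter>k. A k) \<ge> ennreal (1 / real n)" by simp
  have sub: "(\<Inter>k. A k) \<subseteq> Qall"
  proof
    fix c assume c: "c \<in> (\<Inter>k. A k)"
    define F where "F k = K (1 / real (Suc k)) \<inter> {z. snd z = c}" for k
    have "closed {z :: real \<times> real. snd z = c}"
      by (rule closed_Collect_eq) (auto intro!: continuous_intros)
    then have Fc: "compact (F k)" for k unfolding F_def using compact_Int_closed[OF K_compact] by blast
    have Fne: "F k \<noteq> {}" for k
    proof -
      have "c \<in> A k" using c by blast
      then show ?thesis unfolding A_def T_def F_def by auto
    qed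
    have Fmono: "F n' \<subseteq> F m'" if "m' \<le> n'" for m' n'
    proof -
      have "1 / real (Suc n') \<le> 1 / real (Suc m')" using that by (simp add: frac_le)
      then have "K (1 / real (Suc n')) \<subseteq> K (1 / real (Suc m'))" unfolding K_def by auto
      then show ?thesis unfolding F_def by blast
    qed
    have "\<Inter>(range F) \<noteq> {}" by (rule compact_nest[OF Fc Fne Fmono])
    then obtain z where "z \<in> \<Inter>(range F)" by (meson ex_in_conv)
    then have z: "\<And>k. z \<in> F k" by simp
    then have zK0: "z \<in> K0" and zc: "snd z = c" unfolding F_def K_def by auto
    have zk: "\<bar>Phi (fst z) 0\<bar> \<le> 1 / real (Suc k) \<and> \<bar>Phi (fst z) (snd z)\<bar> \<le> 1 / real (Suc k)" for k
      using z[of k] unfolding F_def K_def by blast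
    have p0z: "Phi (fst z) 0 = 0" by (rule small_zero) (use zk in blast)
    have pcz: "Phi (fst z) c = 0" by (rule small_zero) (use zk zc in blast)
    have "fst z \<in> {al..be}" "c \<in> {cl..cu}" using zK0 zc unfolding K0_def Box_def by auto
    moreover have "mfun u (fst z) c \<in> {sl..sh}" "mmfun v (fst z) c \<in> {sl..sh}"
      using zK0 zc unfolding K0_def by auto
    ultimately show "c \<in> Qall" unfolding Qall_def Qset_def using p0z pcz by blast
  qed
  have "Qall \<in> null_sets lebesgue"
    using null_sets_completionI[OF countable_imp_null_set_lborel[OF Qall_countable]] .
  then have "emeasure lebesgue (\<Inter>k. A k) \<le> 0"
    using sub by (metis emeasure_mono null_setsD1 null_setsD2)
  then have "ennreal (1 / real n) \<le> 0" using big by simp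
  moreover have "1 / real n > 0" using n1 by simp
  ultimately show False by simp
qed

end

theorem proposition9:
  fixes sl sh p u v eps0 :: real and n :: nat and f :: "real \<Rightarrow> real"
  assumes "0 < sl" "sl < sh" "sh < 1"
    and "0 < p" "p < 1"
    and "u > 0" "v > 0" "u \<noteq> v"
    and "Eset sl sh u v 0 \<noteq> {}"
    and "eps0 > 0" and "n \<ge> 1"
    and "f \<in> Finf sl sh"
    and "real_analytic_on f {sl<..<sh}"
  shows "f \<notin> Linf_closure sl sh (Fn sl sh p u v eps0 n)"
proof -
  interpret mainl sl sh f p u v eps0 n
    by unfold_locales (use assms in auto)
  show ?thesis by (rule main_result)
qed

end
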